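(* Let $0<q<1$, $t=q^2$, $n\ge1$, and let $z,\alpha>0$ be such that all the $q$-Pochhammer symbols below are non-vanishing with convergent infinite products. For real $u$ and a partition $\lambda$ with at most $n$ parts define (with $k=2$) $$E_P(u;\lambda):=t^{\sum_{i=1}^n(i-1)\lambda_i}\prod_{1\le i<j\le n}(q^{\lambda_i-\lambda_j}t^{j-i};q)_k\prod_{i=1}^n\frac{(ut^{1-i};q)_{\lambda_i}}{(t;q)_{\lambda_i+k(n-i)}},$$ $$E_Q(u;\lambda):=t^{\sum_{i=1}^n(i-1)\lambda_i}\prod_{1\le i<j\le n}(q^{\lambda_i-\lambda_j+1}t^{j-i-1};q)_k\prod_{i=1}^n\frac{(ut^{1-i};q)_{\lambda_i}}{(q;q)_{\lambda_i+k(n-i)}},$$ and for partitions $\kappa\subseteq\mu$ let $$\psi_{\mu/\kappa}:=\prod_{1\le i\le j\le\ell(\kappa)}\frac{f(q^{\kappa_i-\kappa_j}t^{j-i})f(q^{\mu_i-\mu_{j+1}}t^{j-i})}{f(q^{\mu_i-\kappa_j}t^{j-i})f(q^{\kappa_i-\mu_{j+1}}t^{j-i})},\qquad f(x):=\frac{(tx;q)_\infty}{(qx;q)_\infty}.$$ For parameters $z_1,z_2,w,u$ define $$\mathrm{Pr_e}(\mu,\kappa):=\frac{(z_1\alpha;q)_\infty}{(t^nz_1\alpha;q)_\infty}\prod_{p=0}^\infty\frac{(z_1z_2t^p;q)_\infty(wz_1z_2t^{p+n};q)_\infty}{(z_1z_2t^{p+n};q)_\infty(wz_1z_2t^p;q)_\infty}E_Q(t^n;\mu)E_P(w;\kappa)\psi_{\mu/\kappa}z_1^{|\mu|}z_2^{|\kappa|}\alpha^{|\mu|-|\kappa|}$$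 for $\mu_1\ge\kappa_1\ge\mu_2\ge\kappa_2\ge\dots\ge\mu_n\ge\kappa_n\ge0$, and $$\mathrm{Pr_o}(\mu,\kappa):=\frac{(z_1\alpha;q)_\infty}{(uz_1\alpha;q)_\infty}\prod_{p=0}^\infty\frac{(z_1z_2t^p;q)_\infty(uz_1z_2t^{p+n-1};q)_\infty}{(uz_1z_2t^p;q)_\infty(z_1z_2t^{p+n-1};q)_\infty}E_Q(u;\mu)E_P(t^{n-1};\kappa)\psi_{\mu/\kappa}z_1^{|\mu|}z_2^{|\kappa|}\alpha^{|\mu|-|\kappa|}$$ for $\mu_1\ge\kappa_1\ge\dots\ge\mu_{n-1}\ge\kappa_{n-1}\ge\mu_n\ge0$ (with $\kappa_n=0$). For $N\ge1$ and integers $h_1>\dots>h_N\ge0$ let $$P_N(h):=c_N\,z^{\sum_{j=1}^Nh_j}\alpha^{\sum_{j=1}^N(-1)^{j-1}h_j}\prod_{1\le i<j\le N}(q^{h_j}-q^{h_i}),$$ $$c_N:=z^{-\sum_{j=1}^N(N-j)}\alpha^{-[N/2]}\frac{q^{-\sum_{j=1}^N(j-1)(N-j)}}{\prod_{l=1}^{N-1}(q;q)_l}\prod_{i=1}^N(1-\alpha zq^{i-1})\prod_{1\le i<j\le N}(1-z^2q^{i+j-2}).$$ Then: (i) with $w=q^{-1}t^n$, $z_1=z$, $z_2=qz$, and $h_{2j-1}:=\mu_j+2n-(2j-1)$, $h_{2j}:=\kappa_j+2n-2j$ ($1\le j\le n$), one has $\mathrm{Pr_e}(\mu,\kappa)=P_{2n}(h)$;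 (ii) with $u=qt^{n-1}$, $z_1=z$, $z_2=qz$, and $h_{2j-1}:=\mu_j+(2n-1)-(2j-1)$ ($1\le j\le n$), $h_{2j}:=\kappa_j+(2n-1)-2j$ ($1\le j\le n-1$), one has $\mathrm{Pr_o}(\mu,\kappa)=P_{2n-1}(h)$.
   Context: $(x;q)_\infty:=\prod_{i\ge0}(1-xq^i)$, $(x;q)_m:=\prod_{i=0}^{m-1}(1-xq^i)$, $(q;q)_l=(1-q)\cdots(1-q^l)$; $|\lambda|$ is the sum of parts and $\ell(\lambda)$ the number of non-zero parts of a partition; $[N/2]$ is the integer part. $E_P(u;\lambda)$ and $E_Q(u;\lambda)$ are the values, under the specialization of power sums $p_r\mapsto(1-u^r)/(1-t^r)$, of the Macdonald polynomials $P_\lambda(\cdot;q,t)$ and $Q_\lambda(\cdot;q,t)$ for $t=q^k$. $P_N(h)$ is the probability that a symmetric $N\times N$ array of geometric variables with parameters $z^2q^{i+j-2}$ off the diagonal and $\alpha zq^{i-1}$ on the diagonal has RSK shape $\mu$ with $h_j=\mu_j+N-j$. *)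

theory Defs
  imports "HOL-Analysis.Analysis"
begin

definition qpoch :: "real \<Rightarrow> real \<Rightarrow> nat \<Rightarrow> real" where
  "qpoch x q m = (\<Prod>i<m. 1 - x * q ^ i)"

definition qpinf :: "real \<Rightarrow> real \<Rightarrow> real" where
  "qpinf x q = (\<Prod>i. 1 - x * q ^ i)"

text \<open>Partitions are functions nat => nat indexed from 1 (index 0 is ignored).\<close>
definition plen :: "(nat \<Rightarrow> nat) \<Rightarrow> nat" where
  "plen lam = card {i. 1 \<le> i \<and> lam i \<noteq> 0}"

definition psize :: "(nat \<Rightarrow> nat) \<Rightarrow> nat" where
  "psize lam = (\<Sum>i | 1 \<le> i \<and> lam i \<noteq> 0. lam i)"

definition EP :: "real \<Rightarrow> real \<Rightarrow> nat \<Rightarrow> nat \<Rightarrow> real \<Rightarrow> (nat \<Rightarrow> nat) \<Rightarrow> real" where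
  "EP q t k n u lam =
     t ^ (\<Sum>i=1..n. (i - 1) * lam i)
     * (\<Prod>i\<in>{1..n}. \<Prod>j\<in>{i<..n}. qpoch (q powi (int (lam i) - int (lam j)) * t ^ (j - i)) q k)
     * (\<Prod>i=1..n. qpoch (u * t powi (1 - int i)) q (lam i) / qpoch t q (lam i + k * (n - i)))"

definition EQ :: "real \<Rightarrow> real \<Rightarrow> nat \<Rightarrow> nat \<Rightarrow> real \<Rightarrow> (nat \<Rightarrow> nat) \<Rightarrow> real" where
  "EQ q t k n u lam =
     t ^ (\<Sum>i=1..n. (i - 1) * lam i)
     * (\<Prod>i\<in>{1..n}. \<Prod>j\<in>{i<..n}. qpoch (q powi (int (lam i) - int (lam j) + 1) * t ^ (j - i - 1)) q k)
     * (\<Prod>i=1..n. qpoch (u * t powi (1 - int i)) q (lam i) / qpoch q q (lam i + k * (n - i)))"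

definition qf :: "real \<Rightarrow> real \<Rightarrow> real \<Rightarrow> real" where
  "qf q t x = qpinf (t * x) q / qpinf (q * x) q"

definition psi :: "real \<Rightarrow> real \<Rightarrow> (nat \<Rightarrow> nat) \<Rightarrow> (nat \<Rightarrow> nat) \<Rightarrow> real" where
  "psi q t mu ka =
     (\<Prod>i\<in>{1..plen ka}. \<Prod>j\<in>{i..plen ka}.
        qf q t (q powi (int (ka i) - int (ka j)) * t ^ (j - i))
        * qf q t (q powi (int (mu i) - int (mu (Suc j))) * t ^ (j - i))
        / (qf q t (q powi (int (mu i) - int (ka j)) * t ^ (j - i))
           * qf q t (q powi (int (ka i) - int (mu (Suc j))) * t ^ (j - i))))"

definition Pr_e :: "real \<Rightarrow> real \<Rightarrow> nat \<Rightarrow> nat \<Rightarrow> real \<Rightarrow> real \<Rightarrow> real \<Rightarrow> real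
                     \<Rightarrow> (nat \<Rightarrow> nat) \<Rightarrow> (nat \<Rightarrow> nat) \<Rightarrow> real" where
  "Pr_e q t k n z1 z2 w \<alpha> mu ka =
     qpinf (z1 * \<alpha>) q / qpinf (t ^ n * z1 * \<alpha>) q
     * (\<Prod>p. qpinf (z1 * z2 * t ^ p) q * qpinf (w * z1 * z2 * t ^ (p + n)) q
             / (qpinf (z1 * z2 * t ^ (p + n)) q * qpinf (w * z1 * z2 * t ^ p) q))
     * EQ q t k n (t ^ n) mu * EP q t k n w ka * psi q t mu ka
     * z1 ^ psize mu * z2 ^ psize ka * \<alpha> powi (int (psize mu) - int (psize ka))"

definition Pr_o :: "real \<Rightarrow> real \<Rightarrow> nat \<Rightarrow> nat \<Rightarrow> real \<Rightarrow> real \<Rightarrow> real \<Rightarrow> real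
                     \<Rightarrow> (nat \<Rightarrow> nat) \<Rightarrow> (nat \<Rightarrow> nat) \<Rightarrow> real" where
  "Pr_o q t k n z1 z2 u \<alpha> mu ka =
     qpinf (z1 * \<alpha>) q / qpinf (u * z1 * \<alpha>) q
     * (\<Prod>p. qpinf (z1 * z2 * t ^ p) q * qpinf (u * z1 * z2 * t ^ (p + n - 1)) q
             / (qpinf (u * z1 * z2 * t ^ p) q * qpinf (z1 * z2 * t ^ (p + n - 1)) q))
     * EQ q t k n u mu * EP q t k n (t ^ (n - 1)) ka * psi q t mu ka
     * z1 ^ psize mu * z2 ^ psize ka * \<alpha> powi (int (psize mu) - int (psize ka))"

definition cN :: "real \<Rightarrow> real \<Rightarrow> real \<Rightarrow> nat \<Rightarrow> real" where
  "cN q z \<alpha> N =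
     z powi (- (\<Sum>j=1..N. int (N - j))) * \<alpha> powi (- int (N div 2))
     * q powi (- (\<Sum>j=1..N. int ((j - 1) * (N - j)))) / (\<Prod>l=1..N-1. qpoch q q l)
     * (\<Prod>i=1..N. 1 - \<alpha> * z * q ^ (i - 1))
     * (\<Prod>i\<in>{1..N}. \<Prod>j\<in>{i<..N}. 1 - z ^ 2 * q ^ (i + j - 2))"

definition PN :: "real \<Rightarrow> real \<Rightarrow> real \<Rightarrow> nat \<Rightarrow> (nat \<Rightarrow> int) \<Rightarrow> real" where
  "PN q z \<alpha> N h =
     cN q z \<alpha> N * z powi (\<Sum>j=1..N. h j) * \<alpha> powi (\<Sum>j=1..N. (-1) ^ (j - 1) * h j)
     * (\<Prod>i\<in>{1..N}. \<Prod>j\<in>{i<..N}. q powi h j - q powi h i)"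

end

theory Submission
  imports Defs
begin


lemma qp_cp:
  fixes q x :: real assumes "\<bar>q\<bar> < 1"
  shows "convergent_prod (\<lambda>i. 1 - x * q ^ i)"
proof -
  have "summable (\<lambda>i. \<bar>x\<bar> * \<bar>q\<bar> ^ i)"
    using assms by (intro summable_mult summable_geometric) auto
  then have "summable (\<lambda>i. norm ((1 - x * q ^ i) - 1))"
    by (simp add: abs_mult power_abs)
  then have "abs_convergent_prod (\<lambda>i. 1 - x * q ^ i)"
    by (rule summable_imp_abs_convergent_prod)
  then show ?thesis by (rule abs_convergent_prod_imp_convergent_prod)
qed

lemma qpinf_rec:
  fixes q x :: real assumes "\<bar>q\<bar> < 1"
  shows "qpinf x q = (1 - x) * qpinf (x * q) q"
proof -
  have "(\<lambda>i. 1 - x * q ^ i) has_prod ((\<Prod>k<1. 1 - x * q ^ k) * (\<Prod>k. 1 - x * q ^ (k + 1)))"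
    by (rule has_prod_ignore_initial_segment'[OF qp_cp[OF assms]])
  then have "qpinf x q = (1 - x) * (\<Prod>k. 1 - x * q ^ (k + 1))"
    unfolding qpinf_def by (simp add: has_prod_iff)
  also have "(\<lambda>k. 1 - x * q ^ (k + 1)) = (\<lambda>k. 1 - (x * q) * q ^ k)"
    by (simp add: algebra_simps)
  finally show ?thesis by (simp add: qpinf_def)
qed

lemma qpinf_split:
  fixes q x :: real assumes "\<bar>q\<bar> < 1"
  shows "qpinf x q = qpoch x q m * qpinf (x * q ^ m) q"
proof (induction m)
  case 0 then show ?case by (simp add: qpoch_def)
next
  case (Suc m)
  have "qpinf (x * q ^ m) q = (1 - x * q ^ m) * qpinf (x * q ^ m * q) q"
    by (rule qpinf_rec[OF assms])
  also have "x * q ^ m * q = x * q ^ Suc m" by (simp add: mult_ac)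
  finally have h: "qpinf (x * q ^ m) q = (1 - x * q ^ m) * qpinf (x * q ^ Suc m) q" .
  have "qpoch x q (Suc m) = qpoch x q m * (1 - x * q ^ m)" by (simp add: qpoch_def)
  then show ?case using Suc.IH h by (simp only: mult_ac)
qed

lemma qpinf_nz:
  fixes q x :: real assumes "\<bar>q\<bar> < 1" "\<And>i. x * q ^ i \<noteq> 1"
  shows "qpinf x q \<noteq> 0"
  unfolding qpinf_def using assms by (intro prodinf_nonzero qp_cp) auto

lemma qpinf_nz01:
  fixes q x :: real assumes "0 < q" "q < 1" "0 \<le> x" "x < 1"
  shows "qpinf x q \<noteq> 0"
proof (rule qpinf_nz)
  show "\<bar>q\<bar> < 1" using assms by simp
  fix i
  have "q ^ i \<le> 1" using assms by (simp add: power_le_one)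
  then have "x * q ^ i \<le> x" using assms by (simp add: mult_left_le)
  then show "x * q ^ i \<noteq> 1" using assms by simp
qed

lemma qf_pow:
  fixes q :: real assumes "0 < q" "q < 1"
  shows "qf q (q^2) (q ^ e) = 1 / (1 - q ^ (e + 1))"
proof -
  have a: "\<bar>q\<bar> < 1" using assms by simp
  have "q ^ Suc (Suc e) < 1" using assms by (intro power_Suc_less_one) auto
  then have "q ^ (e+2) < 1" by simp
  then have nz: "qpinf (q ^ (e+2)) q \<noteq> 0" using assms by (intro qpinf_nz01) auto
  have e1: "q * q ^ e = q ^ (e+1)" "q\<^sup>2 * q ^ e = q ^ (e+2)" "q ^ (e+1) * q = q ^ (e+2)"
    by (simp_all add: power_add power2_eq_square mult_ac)
  have "qpinf (q ^ (e+1)) q = (1 - q ^ (e+1)) * qpinf (q ^ (e+1) * q) q"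
    by (rule qpinf_rec[OF a])
  then have h: "qpinf (q ^ (e+1)) q = (1 - q ^ (e+1)) * qpinf (q ^ (e+2)) q" by (simp only: e1)
  have "q ^ Suc e < 1" using assms by (intro power_Suc_less_one) auto
  then have "q ^ (e+1) < 1" by simp
  then have "1 - q ^ (e+1) \<noteq> 0" by simp
  then show ?thesis using nz unfolding qf_def e1 h by (simp add: field_simps)
qed




definition pT :: "(nat \<Rightarrow> nat \<Rightarrow> 'a::comm_monoid_mult) \<Rightarrow> nat \<Rightarrow> 'a" where
  "pT F N = (\<Prod>i\<in>{1..N}. \<Prod>j\<in>{i<..N}. F i j)"
definition pU :: "(nat \<Rightarrow> nat \<Rightarrow> 'a::comm_monoid_mult) \<Rightarrow> nat \<Rightarrow> 'a" where
  "pU F N = (\<Prod>i\<in>{1..N}. \<Prod>j\<in>{i..N}. F i j)"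

lemma prod_gt_Suc:
  assumes "i \<le> N"
  shows "(\<Prod>j\<in>{i<..Suc N}. g j) = (\<Prod>j\<in>{i<..N}. g j) * (g (Suc N) :: 'a::comm_monoid_mult)"
proof -
  have "{i<..Suc N} = insert (Suc N) {i<..N}" using assms by auto
  then show ?thesis by (simp add: mult.commute)
qed

lemma prod_ge_Suc:
  assumes "i \<le> Suc N"
  shows "(\<Prod>j\<in>{i..Suc N}. g j) = (\<Prod>j\<in>{i..N}. g j) * (g (Suc N) :: 'a::comm_monoid_mult)"
proof -
  have "{i..Suc N} = insert (Suc N) {i..N}" using assms by auto
  then show ?thesis by (simp add: mult.commute)
qed

lemma prod_inner_Suc:
  assumes "\<And>i. i \<in> A \<Longrightarrow> i \<le> N"
  shows "(\<Prod>i\<in>A. \<Prod>j\<in>{i<..Suc N}. F i j) = (\<Prod>i\<in>A. \<Prod>j\<in>{i<..N}. F i j) * (\<Prod>i\<in>A. (F i (Suc N) :: 'a::comm_monoid_mult))"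
  using assms by (simp add: prod_gt_Suc prod.distrib)

lemma pT_Suc: "pT F (Suc N) = pT F N * (\<Prod>i\<in>{1..N}. F i (Suc N))"
proof -
  have "pT F (Suc N) = (\<Prod>i\<in>{1..N}. \<Prod>j\<in>{i<..Suc N}. F i j)"
    unfolding pT_def by (simp add: prod.cl_ivl_Suc)
  also have "\<dots> = pT F N * (\<Prod>i\<in>{1..N}. F i (Suc N))"
    unfolding pT_def by (rule prod_inner_Suc) auto
  finally show ?thesis .
qed

lemma pU_Suc: "pU F (Suc N) = pU F N * (\<Prod>i\<in>{1..Suc N}. F i (Suc N))"
proof -
  have "pU F (Suc N) = (\<Prod>i\<in>{1..N}. \<Prod>j\<in>{i..Suc N}. F i j) * F (Suc N) (Suc N)"
    unfolding pU_def by (simp add: prod.cl_ivl_Suc)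
  also have "(\<Prod>i\<in>{1..N}. \<Prod>j\<in>{i..Suc N}. F i j) = pU F N * (\<Prod>i\<in>{1..N}. F i (Suc N))"
    unfolding pU_def by (simp add: prod_ge_Suc prod.distrib)
  finally show ?thesis by (simp add: prod.cl_ivl_Suc mult.assoc)
qed

lemma prod_split2: "(\<Prod>k\<in>{1..2*(n::nat)}. g k) = (\<Prod>i\<in>{1..n}. g (2*i-1) * (g (2*i) :: 'a::comm_monoid_mult))"
proof (induction n)
  case 0 then show ?case by simp
next
  case (Suc n)
  have "(\<Prod>k\<in>{1..2*Suc n}. g k) = (\<Prod>k\<in>{1..2*n}. g k) * g (Suc (2*n)) * g (Suc (Suc (2*n)))"
    by (simp add: prod.cl_ivl_Suc mult.assoc)
  with Suc show ?case by (simp add: prod.cl_ivl_Suc mult.assoc)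
qed

lemma sum_split2: "(\<Sum>k\<in>{1..2*(n::nat)}. g k) = (\<Sum>i\<in>{1..n}. g (2*i-1) + (g (2*i) :: 'a::comm_monoid_add))"
proof (induction n)
  case 0 then show ?case by simp
next
  case (Suc n)
  have "(\<Sum>k\<in>{1..2*Suc n}. g k) = (\<Sum>k\<in>{1..2*n}. g k) + g (Suc (2*n)) + g (Suc (Suc (2*n)))"
    by (simp add: sum.cl_ivl_Suc add.assoc)
  with Suc show ?case by (simp add: sum.cl_ivl_Suc add.assoc)
qed

lemma pT_split_even:
  "pT F (2*n) = pT (\<lambda>i j. F (2*i-1) (2*j-1) * F (2*i) (2*j)) n * pU (\<lambda>i j. F (2*i-1) (2*j)) n
     * pT (\<lambda>i j. F (2*i) (2*j-1)) n"
proof (induction n)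
  case 0 then show ?case by (simp add: pT_def pU_def)
next
  case (Suc n)
  have e: "2 * Suc n = Suc (Suc (2*n))" by simp
  have A: "(\<Prod>i\<in>{1..2*n}. F i (Suc (2*n))) = (\<Prod>i\<in>{1..n}. F (2*i-1) (Suc (2*n)) * F (2*i) (Suc (2*n)))"
    by (rule prod_split2)
  have B: "(\<Prod>i\<in>{1..Suc (2*n)}. F i (Suc (Suc (2*n)))) =
      (\<Prod>i\<in>{1..n}. F (2*i-1) (Suc (Suc (2*n))) * F (2*i) (Suc (Suc (2*n)))) * F (Suc (2*n)) (Suc (Suc (2*n)))"
    using prod_split2[of "\<lambda>i. F i (Suc (Suc (2*n)))" n] by (simp add: prod.cl_ivl_Suc)
  have C: "(\<Prod>i\<in>{1..Suc n}. F (2*i-1) (2 * Suc n)) = (\<Prod>i\<in>{1..n}. F (2*i-1) (Suc (Suc (2*n)))) * F (Suc (2*n)) (Suc (Suc (2*n)))"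
    by (simp add: prod.cl_ivl_Suc)
  have "pT F (2 * Suc n) = pT F (2*n) * (\<Prod>i\<in>{1..2*n}. F i (Suc (2*n))) * (\<Prod>i\<in>{1..Suc (2*n)}. F i (Suc (Suc (2*n))))"
    unfolding e pT_Suc by simp
  also have "\<dots> = pT (\<lambda>i j. F (2*i-1) (2*j-1) * F (2*i) (2*j)) (Suc n) * pU (\<lambda>i j. F (2*i-1) (2*j)) (Suc n)
     * pT (\<lambda>i j. F (2*i) (2*j-1)) (Suc n)"
    unfolding Suc.IH A B pT_Suc[of _ n] pU_Suc[of _ n] C
    by (simp add: prod.distrib mult_ac)
  finally show ?case .
qed

lemma pT_split_odd:
  "pT F (Suc (2*n)) = pT (\<lambda>i j. F (2*i-1) (2*j-1)) (Suc n) * pT (\<lambda>i j. F (2*i) (2*j)) n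
     * pU (\<lambda>i j. F (2*i-1) (2*j)) n * pT (\<lambda>i j. F (2*i) (2*j-1)) (Suc n)"
proof -
  have P: "pT (\<lambda>i j. F (2*i-1) (2*j-1) * F (2*i) (2*j)) n = pT (\<lambda>i j. F (2*i-1) (2*j-1)) n * pT (\<lambda>i j. F (2*i) (2*j)) n"
    unfolding pT_def by (simp add: prod.distrib)
  have K: "pT (\<lambda>i j. F (2*i) (2*j-1)) (Suc n) = pT (\<lambda>i j. F (2*i) (2*j-1)) n * (\<Prod>i\<in>{1..n}. F (2*i) (Suc (2*n)))"
    by (simp add: pT_Suc)
  have O: "pT (\<lambda>i j. F (2*i-1) (2*j-1)) (Suc n) = pT (\<lambda>i j. F (2*i-1) (2*j-1)) n * (\<Prod>i\<in>{1..n}. F (2*i-1) (Suc (2*n)))"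
    by (simp add: pT_Suc)
  show ?thesis
    unfolding pT_Suc[of F "2*n"] pT_split_even P K O prod_split2
    by (simp add: prod.distrib mult_ac)
qed




lemma telescope:
  fixes Y f :: "nat \<Rightarrow> real"
  assumes Ynz: "\<And>p. Y p \<noteq> 0" and Y1: "Y \<longlonglongrightarrow> 1" and cp: "convergent_prod f"
    and fY: "\<And>p. f p = Y p / Y (p + K)"
  shows "prodinf f = (\<Prod>r<K. Y r)"
proof -
  have key: "(\<Prod>r<K. Y (a + r)) * Y (a + K) = Y a * (\<Prod>r<K. Y (Suc a + r))" for a
  proof -
    have "(\<Prod>r<Suc K. Y (a + r)) = (\<Prod>r<K. Y (a + r)) * Y (a + K)" by simp
    moreover have "(\<Prod>r<Suc K. Y (a + r)) = Y a * (\<Prod>r<K. Y (Suc a + r))"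
      by (subst prod.lessThan_Suc_shift) simp
    ultimately show ?thesis by simp
  qed
  have pnz: "(\<Prod>r<K. Y (a + r)) \<noteq> 0" for a using Ynz by (simp add: prod_zero_iff)
  have part: "(\<Prod>p\<le>P. f p) = (\<Prod>r<K. Y r) / (\<Prod>r<K. Y (Suc P + r))" for P
  proof (induction P)
    case 0
    have "(\<Prod>r<K. Y (0 + r)) * Y (0 + K) = Y 0 * (\<Prod>r<K. Y (Suc 0 + r))" by (rule key)
    then show ?case using pnz[of 0] pnz[of 1] Ynz[of K] by (simp add: fY field_simps)
  next
    case (Suc P)
    have "(\<Prod>p\<le>Suc P. f p) = (\<Prod>r<K. Y r) / (\<Prod>r<K. Y (Suc P + r)) * (Y (Suc P) / Y (Suc P + K))"
      using Suc by (simp add: fY)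
    also have "\<dots> = (\<Prod>r<K. Y r) / (\<Prod>r<K. Y (Suc (Suc P) + r))"
      using key[of "Suc P"] pnz[of "Suc P"] pnz[of "Suc (Suc P)"] Ynz[of "Suc P + K"] Ynz[of "Suc P"]
      by (simp add: field_simps)
    finally show ?case .
  qed
  have "(\<lambda>P. \<Prod>r<K. Y (Suc P + r)) \<longlonglongrightarrow> (\<Prod>r<K. 1)"
  proof (rule tendsto_prod)
    fix r assume "r \<in> {..<K}"
    have "(\<lambda>P. Y (P + Suc r)) \<longlonglongrightarrow> 1" by (rule LIMSEQ_ignore_initial_segment[OF Y1])
    then show "(\<lambda>P. Y (Suc P + r)) \<longlonglongrightarrow> 1" by simp
  qed
  then have "(\<lambda>P. (\<Prod>r<K. Y r) / (\<Prod>r<K. Y (Suc P + r))) \<longlonglongrightarrow> (\<Prod>r<K. Y r) / 1"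
    by (intro tendsto_divide tendsto_const) auto
  then have "(\<lambda>P. \<Prod>p\<le>P. f p) \<longlonglongrightarrow> (\<Prod>r<K. Y r)" by (simp add: part)
  moreover have "(\<lambda>P. \<Prod>p\<le>P. f p) \<longlonglongrightarrow> prodinf f" by (rule convergent_prod_LIMSEQ[OF cp])
  ultimately show ?thesis using LIMSEQ_unique by blast
qed

lemma pair_prod: "(\<Prod>r<(K::nat). g (2*r) * g (2*r+1)) = (\<Prod>e<2*K. (g e :: 'a::comm_monoid_mult))"
  by (induction K) (simp_all add: mult_ac)

lemma prod_lt_cong: "(\<And>e. e < N \<Longrightarrow> a e = b e) \<Longrightarrow> (\<Prod>e<(N::nat). G (a e)) = (\<Prod>e<N. (G (b e) :: 'a::comm_monoid_mult))"
  by (rule prod.cong) auto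

lemma pT_G_step:
  "pT (\<lambda>i j. G (i+j)) (N+2) = pT (\<lambda>i j. G (i+j)) N * (\<Prod>e<N. G (e + N + 2)) * (\<Prod>e<Suc N. (G (e + N + 3) :: 'a::comm_monoid_mult))"
proof -
  have a: "(\<Prod>i\<in>{1..N}. G (i + Suc N)) = (\<Prod>e<N. G (e + N + 2))"
    by (simp only: One_nat_def prod.atLeast1_atMost_eq) (rule prod_lt_cong, simp)
  have b: "(\<Prod>i\<in>{1..Suc N}. G (i + Suc (Suc N))) = (\<Prod>e<Suc N. G (e + N + 3))"
    by (simp only: One_nat_def prod.atLeast1_atMost_eq) (rule prod_lt_cong, simp)
  have e: "N + 2 = Suc (Suc N)" by simp
  show ?thesis unfolding e pT_Suc a b by (simp only: mult_ac)
qed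

lemma R_step:
  fixes K W :: nat
  shows "(\<Prod>r<K+1. \<Prod>i<W+2. G (2*r+i+3)) = (\<Prod>r<K. \<Prod>i<W. G (2*r+i+3)) * (\<Prod>e<2*K. G (W+3+e))
     * (\<Prod>i<W+2. (G (2*K+i+3) :: 'a::comm_monoid_mult))"
proof -
  have c: "(\<Prod>i<W+2. G (2*r+i+3)) = (\<Prod>i<W. G (2*r+i+3)) * (G (W+3+2*r) * G (W+3+(2*r+1)))" for r
  proof -
    have "W + 2 = Suc (Suc W)" by simp
    then have "(\<Prod>i<W+2. G (2*r+i+3)) = (\<Prod>i<W. G (2*r+i+3)) * G (2*r+W+3) * G (2*r+Suc W+3)"
      by simp
    also have "2*r+W+3 = W+3+2*r" by simp
    also have "2*r+Suc W+3 = W+3+(2*r+1)" by simp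
    finally show ?thesis by (simp only: mult_ac)
  qed
  have "(\<Prod>r<K. \<Prod>i<W+2. G (2*r+i+3)) = (\<Prod>r<K. (\<Prod>i<W. G (2*r+i+3)) * (G (W+3+2*r) * G (W+3+(2*r+1))))"
    by (simp only: c)
  also have "\<dots> = (\<Prod>r<K. \<Prod>i<W. G (2*r+i+3)) * (\<Prod>r<K. G (W+3+2*r) * G (W+3+(2*r+1)))"
    by (rule prod.distrib)
  also have "(\<Prod>r<K. G (W+3+2*r) * G (W+3+(2*r+1))) = (\<Prod>e<2*K. G (W+3+e))"
    by (rule pair_prod[where g="\<lambda>e. G (W+3+e)"])
  finally have h: "(\<Prod>r<K. \<Prod>i<W+2. G (2*r+i+3)) = (\<Prod>r<K. \<Prod>i<W. G (2*r+i+3)) * (\<Prod>e<2*K. G (W+3+e))" .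
  have e: "K + 1 = Suc K" by simp
  show ?thesis unfolding e prod.lessThan_Suc h by (simp only: mult_ac)
qed

lemma vand_even: "pT (\<lambda>i j. G (i+j)) (2*k+2) = (\<Prod>r<k+1. \<Prod>i<2*k+1. (G (2*r+i+3) :: 'a::comm_monoid_mult))"
proof (induction k)
  case 0
  have "{Suc 0<..Suc (Suc 0)} = {Suc (Suc 0)}" by auto
  then show ?case by (simp add: numeral_2_eq_2 pT_Suc pT_def numeral_3_eq_3)
next
  case (Suc k)
  have e1: "2 * Suc k + 2 = (2*k+2) + 2" "Suc k + 1 = (k+1)+1" "2 * Suc k + 1 = (2*k+1)+2" by simp_all
  have x1: "(\<Prod>e<2*k+2. G (e + (2*k+2) + 2)) = (\<Prod>e<2*(k+1). G ((2*k+1)+3+e))"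
  proof -
    have "2*(k+1) = 2*k+2" by simp
    then show ?thesis by (simp only:) (rule prod_lt_cong, simp)
  qed
  have x2: "(\<Prod>e<Suc (2*k+2). G (e + (2*k+2) + 3)) = (\<Prod>i<(2*k+1)+2. G (2*(k+1)+i+3))"
  proof -
    have "(2*k+1)+2 = Suc (2*k+2)" by simp
    then show ?thesis by (simp only:) (rule prod_lt_cong, simp)
  qed
  show ?case unfolding e1 pT_G_step[where N="2*k+2"] Suc.IH R_step x1 x2 by (simp only: mult_ac)
qed

lemma vand_odd: "pT (\<lambda>i j. G (i+j)) (2*k+1) = (\<Prod>r<k. \<Prod>i<2*k+1. (G (2*r+i+3) :: 'a::comm_monoid_mult))"
proof (induction k)
  case 0 then show ?case by (simp add: pT_def)
next
  case (Suc k)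
  have e1: "2 * Suc k + 1 = (2*k+1) + 2" by simp
  have x1: "(\<Prod>e<2*k+1. G (e + (2*k+1) + 2)) = G (2*k+3) * (\<Prod>e<2*k. G (2*k+1+3+e))"
  proof -
    have "(\<Prod>e<2*k+1. G (e + (2*k+1) + 2)) = (\<Prod>e<Suc (2*k). G (e + (2*k+1) + 2))" by simp
    also have "\<dots> = G (0 + (2*k+1) + 2) * (\<Prod>e<2*k. G (Suc e + (2*k+1) + 2))"
      by (rule prod.lessThan_Suc_shift)
    also have "0 + (2*k+1) + 2 = 2*k+3" by simp
    also have "(\<Prod>e<2*k. G (Suc e + (2*k+1) + 2)) = (\<Prod>e<2*k. G (2*k+1+3+e))"
      by (rule prod_lt_cong) simp
    finally show ?thesis .
  qed
  have x2: "(\<Prod>i<(2*k+1)+2. G (2*k+i+3)) = G (2*k+3) * (\<Prod>e<Suc (2*k+1). G (e + (2*k+1) + 3))"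
  proof -
    have "(\<Prod>i<(2*k+1)+2. G (2*k+i+3)) = (\<Prod>i<Suc (2*k+2). G (2*k+i+3))" by simp
    also have "\<dots> = G (2*k+0+3) * (\<Prod>i<2*k+2. G (2*k+Suc i+3))"
      by (rule prod.lessThan_Suc_shift)
    also have "2*k+0+3 = 2*k+3" by simp
    also have "(\<Prod>i<2*k+2. G (2*k+Suc i+3)) = (\<Prod>e<Suc (2*k+1). G (e + (2*k+1) + 3))"
    proof -
      have "Suc (2*k+1) = 2*k+2" by simp
      then show ?thesis by (simp only:) (rule prod_lt_cong, simp)
    qed
    finally show ?thesis .
  qed
  show ?case unfolding e1 pT_G_step Suc.IH unfolding Suc_eq_plus1 R_step x1 x2 by (simp only: mult_ac)
qed




definition E :: "real \<Rightarrow> int \<Rightarrow> real" where "E q k = 1 - q powi k"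
definition al :: "(nat \<Rightarrow> nat) \<Rightarrow> nat \<Rightarrow> int" where "al mu i = int (mu i) - 2 * int i"
definition be :: "(nat \<Rightarrow> nat) \<Rightarrow> nat \<Rightarrow> int" where "be ka i = int (ka i) - 2 * int i - 1"

lemma E_nz: assumes "0 < q" "q < 1" "k > 0" shows "E q k \<noteq> 0"
proof -
  have "q powi k = q ^ nat k" using assms by (simp add: power_int_nonneg_exp)
  also have "\<dots> < 1" using assms by (simp add: power_less_one_iff)
  finally show ?thesis by (simp add: E_def)
qed

lemma E_nat: "E q (int e) = 1 - q ^ e" unfolding E_def power_int_of_nat ..

lemma powi_q2: assumes "(q::real) \<noteq> 0" shows "q powi a * (q^2)^m = q powi (a + 2 * int m)"
proof -
  have h1: "(q^2)^m = q ^ (2 * m)" by (rule power_mult[symmetric])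
  have h2: "q ^ (2 * m) = q powi (int (2 * m))" by (rule power_int_of_nat[symmetric])
  have h3: "int (2 * m) = 2 * int m" by simp
  have h4: "q powi (a + 2 * int m) = q powi a * q powi (2 * int m)"
    by (rule power_int_add) (rule disjI1, rule assms)
  show ?thesis by (subst h4, subst h1, subst h2, subst h3, rule refl)
qed

lemma qf_E:
  assumes q: "0 < q" "q < 1" and ba: "b \<le> a"
  shows "qf q (q^2) (q powi (int a - int b) * (q^2)^d) = 1 / E q (int a - int b + 2 * int d + 1)"
proof -
  have g1: "int a - int b = int (a - b)" using ba by simp
  have "q powi (int a - int b) * (q^2)^d = q ^ (a - b) * q ^ (2 * d)"
    unfolding g1 power_int_of_nat power_mult ..
  also have "\<dots> = q ^ (a - b + 2 * d)" by (rule power_add[symmetric])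
  finally have g2: "q powi (int a - int b) * (q^2)^d = q ^ (a - b + 2 * d)" .
  have "qf q (q^2) (q powi (int a - int b) * (q^2)^d) = 1 / (1 - q ^ (a - b + 2 * d + 1))"
    unfolding g2 by (rule qf_pow[OF q])
  also have "1 - q ^ (a - b + 2 * d + 1) = E q (int (a - b + 2 * d + 1))" by (rule E_nat[symmetric])
  also have "int (a - b + 2 * d + 1) = int a - int b + 2 * int d + 1" using ba by simp
  finally show ?thesis .
qed

lemma inv4: "1 / (a::real) * (1 / b) / (1 / c * (1 / d)) = c * d / (a * b)"
  by (simp add: divide_inverse inverse_mult_distrib mult_ac)

locale ilace =
  fixes n :: nat and mu ka :: "nat \<Rightarrow> nat"
  assumes il: "\<And>j. 1 \<le> j \<Longrightarrow> j \<le> n \<Longrightarrow> ka j \<le> mu j \<and> mu (Suc j) \<le> ka j"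
    and z: "\<And>i. i > n \<Longrightarrow> mu i = 0 \<and> ka i = 0"
begin

lemma mono_ka: assumes "1 \<le> i" "i \<le> j" shows "ka j \<le> ka i"
  using assms(2)
proof (induction j rule: dec_induct)
  case base then show ?case by simp
next
  case (step j)
  show ?case
  proof (cases "Suc j \<le> n")
    case True
    then have "ka (Suc j) \<le> mu (Suc j)" "mu (Suc j) \<le> ka j" using il[of "Suc j"] il[of j] step assms by auto
    then show ?thesis using step by simp
  next
    case False then show ?thesis using z by simp
  qed
qed

lemma mono_mu: assumes "1 \<le> i" "i \<le> j" shows "mu j \<le> mu i"
  using assms(2)
proof (induction j rule: dec_induct)
  case base then show ?case by simp
next
  case (step j)
  show ?case
  proof (cases "j \<le> n")
    case True
    then have "mu (Suc j) \<le> ka j" "ka j \<le> mu j" using il[of j] step assms by auto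
    then show ?thesis using step by simp
  next
    case False then show ?thesis using z by simp
  qed
qed

lemma ka_le_mu: "1 \<le> i \<Longrightarrow> i \<le> j \<Longrightarrow> ka j \<le> mu i"
proof -
  assume a: "1 \<le> i" "i \<le> j"
  have "ka j \<le> ka i" using mono_ka a .
  also have "ka i \<le> mu i" using il[of i] z[of i] a by (cases "i \<le> n") auto
  finally show ?thesis .
qed

lemma mu_le_ka: "1 \<le> i \<Longrightarrow> i \<le> j \<Longrightarrow> mu (Suc j) \<le> ka i"
proof -
  assume a: "1 \<le> i" "i \<le> j"
  have "mu (Suc j) \<le> ka j" using il[of j] z[of "Suc j"] a by (cases "j \<le> n") auto
  also have "ka j \<le> ka i" using mono_ka a .
  finally show ?thesis .
qed

definition PP :: "real \<Rightarrow> nat \<Rightarrow> nat \<Rightarrow> real" where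
  "PP q i j = E q (al mu i - be ka j) * E q (be ka i - al mu (Suc j))
      / (E q (be ka i - be ka j + 1) * E q (al mu i - al mu (Suc j) - 1))"

lemma psi_term:
  assumes q: "0 < q" "q < 1" and ij: "1 \<le> i" "i \<le> j"
  shows "qf q (q^2) (q powi (int (ka i) - int (ka j)) * (q^2) ^ (j - i))
        * qf q (q^2) (q powi (int (mu i) - int (mu (Suc j))) * (q^2) ^ (j - i))
        / (qf q (q^2) (q powi (int (mu i) - int (ka j)) * (q^2) ^ (j - i))
           * qf q (q^2) (q powi (int (ka i) - int (mu (Suc j))) * (q^2) ^ (j - i))) = PP q i j"
proof -
  have le: "ka j \<le> ka i" "mu (Suc j) \<le> mu i" "ka j \<le> mu i" "mu (Suc j) \<le> ka i"
    using mono_ka[OF ij] mono_mu[of i "Suc j"] ka_le_mu[OF ij] mu_le_ka[OF ij] ij by auto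
  have d: "int (j - i) = int j - int i" using ij by simp
  have a1: "int (ka i) - int (ka j) + 2 * int (j - i) + 1 = be ka i - be ka j + 1"
    unfolding d be_def by simp
  have a2: "int (mu i) - int (mu (Suc j)) + 2 * int (j - i) + 1 = al mu i - al mu (Suc j) - 1"
    unfolding d al_def by simp
  have a3: "int (mu i) - int (ka j) + 2 * int (j - i) + 1 = al mu i - be ka j"
    unfolding d al_def be_def by simp
  have a4: "int (ka i) - int (mu (Suc j)) + 2 * int (j - i) + 1 = be ka i - al mu (Suc j)"
    unfolding d al_def be_def by simp
  have b1: "qf q (q^2) (q powi (int (ka i) - int (ka j)) * (q^2) ^ (j - i)) = 1 / E q (be ka i - be ka j + 1)"
    using qf_E[OF q le(1), of "j - i"] unfolding a1 .
  have b2: "qf q (q^2) (q powi (int (mu i) - int (mu (Suc j))) * (q^2) ^ (j - i)) = 1 / E q (al mu i - al mu (Suc j) - 1)"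
    using qf_E[OF q le(2), of "j - i"] unfolding a2 .
  have b3: "qf q (q^2) (q powi (int (mu i) - int (ka j)) * (q^2) ^ (j - i)) = 1 / E q (al mu i - be ka j)"
    using qf_E[OF q le(3), of "j - i"] unfolding a3 .
  have b4: "qf q (q^2) (q powi (int (ka i) - int (mu (Suc j))) * (q^2) ^ (j - i)) = 1 / E q (be ka i - al mu (Suc j))"
    using qf_E[OF q le(4), of "j - i"] unfolding a4 .
  show ?thesis unfolding b1 b2 b3 b4 PP_def by (rule inv4)
qed

lemma ka_set: "\<exists>L\<le>n. {i. 1 \<le> i \<and> ka i \<noteq> 0} = {1..L}"
proof (cases "{i. 1 \<le> i \<and> ka i \<noteq> 0} = {}")
  case True then show ?thesis by (intro exI[of _ 0]) auto
next
  case False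
  let ?S = "{i. 1 \<le> i \<and> ka i \<noteq> 0}"
  have sub: "?S \<subseteq> {1..n}"
  proof
    fix i assume "i \<in> ?S" then show "i \<in> {1..n}" using z[of i] by (cases "i \<le> n") auto
  qed
  then have fin: "finite ?S" by (rule finite_subset) simp
  define L where "L = Max ?S"
  have LS: "L \<in> ?S" unfolding L_def using fin False by (rule Max_in)
  have "L \<le> n" using LS sub by auto
  moreover have "?S = {1..L}"
  proof
    show "?S \<subseteq> {1..L}"
    proof
      fix i assume i: "i \<in> ?S"
      have "i \<le> L" unfolding L_def using fin i by (rule Max_ge)
      then show "i \<in> {1..L}" using i by simp
    qed
    show "{1..L} \<subseteq> ?S"
    proof
      fix i assume "i \<in> {1..L}"
      then have "1 \<le> i" "i \<le> L" by auto
      then have "ka L \<le> ka i" by (rule mono_ka)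
      then show "i \<in> ?S" using LS \<open>1 \<le> i\<close> by auto
    qed
  qed
  ultimately have "L \<le> n \<and> ?S = {1..L}" by (rule conjI)
  then show ?thesis by (rule exI)
qed


end



context ilace begin
lemma psi_eq:
  assumes q: "0 < q" "q < 1"
  shows "psi q (q^2) mu ka = pU (\<lambda>i j. PP q i j) n"
proof -
  obtain L where L: "L \<le> n" "{i. 1 \<le> i \<and> ka i \<noteq> 0} = {1..L}" using ka_set by blast
  have pl: "plen ka = L" unfolding plen_def L(2) by simp
  have kz: "ka j = 0" if "j > L" for j
  proof (rule ccontr)
    assume "ka j \<noteq> 0"
    then have "j \<in> {i. 1 \<le> i \<and> ka i \<noteq> 0}" using that by auto
    then have "j \<in> {1..L}" by (simp only: L(2))
    then show False using that by simp
  qed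
  have one: "PP q i j = 1" if "1 \<le> i" "i \<le> j" "j \<le> n" "L < j" for i j
  proof -
    have k0: "ka j = 0" using kz that by simp
    have m0: "mu (Suc j) = 0"
    proof (cases "j < n")
      case True then show ?thesis using il[of j] k0 that by simp
    next
      case False then show ?thesis using z[of "Suc j"] that by simp
    qed
    have A: "al mu i - be ka j = al mu i - al mu (Suc j) - 1" "be ka i - al mu (Suc j) = be ka i - be ka j + 1"
      using k0 m0 by (simp_all add: al_def be_def)
    have "al mu i - be ka j > 0" "be ka i - al mu (Suc j) > 0"
      using k0 m0 that by (simp_all add: al_def be_def)
    then have "E q (al mu i - be ka j) \<noteq> 0" "E q (be ka i - al mu (Suc j)) \<noteq> 0"
      using E_nz q by auto
    then show ?thesis unfolding PP_def A by simp
  qed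
  have "pU (\<lambda>i j. PP q i j) n = (\<Prod>i\<in>{1..n}. \<Prod>j\<in>{i..L}. PP q i j)"
    unfolding pU_def
  proof (rule prod.cong[OF refl])
    fix i assume i: "i \<in> {1..n}"
    show "(\<Prod>j\<in>{i..n}. PP q i j) = (\<Prod>j\<in>{i..L}. PP q i j)"
    proof (rule prod.mono_neutral_right)
      show "{i..L} \<subseteq> {i..n}" using L by auto
      show "\<forall>j\<in>{i..n} - {i..L}. PP q i j = 1"
      proof
        fix j assume "j \<in> {i..n} - {i..L}"
        then have "1 \<le> i" "i \<le> j" "j \<le> n" "L < j" using i by auto
        then show "PP q i j = 1" by (rule one)
      qed
    qed simp
  qed
  also have "\<dots> = (\<Prod>i\<in>{1..L}. \<Prod>j\<in>{i..L}. PP q i j)"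
  proof (rule prod.mono_neutral_right)
    show "{1..L} \<subseteq> {1..n}" using L by auto
  qed auto
  also have "\<dots> = psi q (q^2) mu ka"
    unfolding psi_def pl
    by (rule prod.cong[OF refl], rule prod.cong[OF refl], rule psi_term[OF q, symmetric]) auto
  finally show ?thesis by simp
qed

end



lemma qpoch2: "qpoch x q 2 = (1 - x) * (1 - x * q)"
  by (simp add: qpoch_def numeral_2_eq_2)

lemma qpoch_add: "qpoch x q (a + b) = qpoch x q a * qpoch (x * q ^ a) q b"
proof (induction b)
  case 0 then show ?case by (simp add: qpoch_def)
next
  case (Suc b)
  have "qpoch x q (a + Suc b) = qpoch x q (a + b) * (1 - x * q ^ (a + b))" by (simp add: qpoch_def)
  also have "\<dots> = qpoch x q a * qpoch (x * q ^ a) q b * (1 - x * q ^ a * q ^ b)"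
    using Suc by (simp add: power_add mult.assoc)
  also have "\<dots> = qpoch x q a * qpoch (x * q ^ a) q (Suc b)"
    by (simp add: qpoch_def mult.assoc)
  finally show ?case .
qed

lemma qpoch_Suc: "qpoch x q (Suc k) = qpoch x q k * (1 - x * q ^ k)"
  by (simp add: qpoch_def)

lemma qpoch_qq_Suc: "qpoch q q (Suc k) = qpoch q q k * (1 - q ^ Suc k)"
  by (simp add: qpoch_def)

lemma qpoch_pos: assumes "0 < q" "q < 1" "0 \<le> x" "x \<le> 1" shows "qpoch (x * q) q k > 0"
  unfolding qpoch_def
proof (rule prod_pos)
  fix i assume "i \<in> {..<k}"
  have "q ^ Suc i < 1" using assms by (intro power_Suc_less_one) auto
  moreover have "x * q ^ Suc i \<le> q ^ Suc i" using assms by (simp add: mult_left_le_one_le)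
  ultimately have "x * q * q ^ i < 1" by (simp add: mult.assoc)
  then show "0 < 1 - x * q * q ^ i" by simp
qed

lemma qpoch_qq_nz: assumes "0 < q" "q < 1" shows "qpoch q q k \<noteq> 0"
  using qpoch_pos[OF assms, of 1 k] by simp

lemma qpoch_shift: assumes "0 < q" "q < 1"
  shows "qpoch (q ^ Suc a) q m = qpoch q q (a + m) / qpoch q q a"
proof -
  have "qpoch q q (a + m) = qpoch q q a * qpoch (q * q ^ a) q m" by (rule qpoch_add)
  then show ?thesis using qpoch_qq_nz[OF assms, of a] by simp
qed

lemma qpoch_q2: assumes "0 < q" "q < 1"
  shows "qpoch (q^2) q k = qpoch q q (Suc k) / (1 - q)"
proof -
  have "qpoch q q (1 + k) = qpoch q q 1 * qpoch (q * q ^ 1) q k" by (rule qpoch_add)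
  moreover have "qpoch q q 1 = 1 - q" by (simp add: qpoch_def)
  moreover have "q * q ^ 1 = q^2" by (simp add: power2_eq_square)
  ultimately have "qpoch q q (Suc k) = (1 - q) * qpoch (q^2) q k" by simp
  moreover have "1 - q \<noteq> 0" using assms by simp
  ultimately show ?thesis by simp
qed

lemma PW: assumes "(q::real) \<noteq> 0" shows "q powi c * (q^2) powi (1 - int i) = q powi (c + (2 - 2 * int i))"
proof -
  have h: "(q^2) powi (1 - int i) = q powi (2 * (1 - int i))"
    by (simp only: power_int_mult) simp
  show ?thesis unfolding h
    by (subst power_int_add) (use assms in simp_all)
qed

lemma powi_nat: "c = int e \<Longrightarrow> (q::real) powi c = q ^ e" by simp

lemma EQ_inner:
  assumes q: "0 < q" and ij: "i < j"
  shows "qpoch (q powi (int (mu i) - int (mu j) + 1) * (q^2)^(j-i-1)) q 2 = E q (al mu i - al mu j - 1) * E q (al mu i - al mu j)"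
proof -
  have d: "int (j - i - 1) = int j - int i - 1" using ij by linarith
  have c: "int (mu i) - int (mu j) + 1 + 2 * int (j - i - 1) = al mu i - al mu j - 1"
    unfolding d al_def by simp
  have x: "q powi (int (mu i) - int (mu j) + 1) * (q^2)^(j-i-1) = q powi (al mu i - al mu j - 1)"
    unfolding powi_q2[of q, OF order.strict_implies_not_eq[OF q, symmetric]] c ..
  have e: "al mu i - al mu j = (al mu i - al mu j - 1) + 1" by simp
  have xq: "q powi (al mu i - al mu j - 1) * q = q powi (al mu i - al mu j)"
    by (subst (2) e, rule power_int_add_1[symmetric]) (use q in simp)
  show ?thesis unfolding qpoch2 x xq E_def ..
qed

lemma EP_inner:
  assumes q: "0 < q" and ij: "i < j"
  shows "qpoch (q powi (int (ka i) - int (ka j)) * (q^2)^(j-i)) q 2 = E q (be ka i - be ka j) * E q (be ka i - be ka j + 1)"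
proof -
  have d: "int (j - i) = int j - int i" using ij by linarith
  have c: "int (ka i) - int (ka j) + 2 * int (j - i) = be ka i - be ka j"
    unfolding d be_def by simp
  have x: "q powi (int (ka i) - int (ka j)) * (q^2)^(j-i) = q powi (be ka i - be ka j)"
    unfolding powi_q2[of q, OF order.strict_implies_not_eq[OF q, symmetric]] c ..
  have xq: "q powi (be ka i - be ka j) * q = q powi (be ka i - be ka j + 1)"
    by (rule power_int_add_1[symmetric]) (use q in simp)
  show ?thesis unfolding qpoch2 x xq E_def ..
qed

lemma EQ_exp:
  assumes q: "0 < q"
  shows "EQ q (q^2) 2 n u mu = (q^2)^(\<Sum>i=1..n. (i-1) * mu i)
     * pT (\<lambda>i j. E q (al mu i - al mu j - 1) * E q (al mu i - al mu j)) n
     * (\<Prod>i=1..n. qpoch (u * (q^2) powi (1 - int i)) q (mu i) / qpoch q q (mu i + 2 * (n - i)))"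
proof -
  have inner: "(\<Prod>i\<in>{1..n}. \<Prod>j\<in>{i<..n}. qpoch (q powi (int (mu i) - int (mu j) + 1) * (q^2)^(j-i-1)) q 2)
     = pT (\<lambda>i j. E q (al mu i - al mu j - 1) * E q (al mu i - al mu j)) n"
    unfolding pT_def by (rule prod.cong[OF refl], rule prod.cong[OF refl], rule EQ_inner[OF q]) auto
  show ?thesis unfolding EQ_def inner ..
qed

lemma EP_exp:
  assumes q: "0 < q"
  shows "EP q (q^2) 2 n w ka = (q^2)^(\<Sum>i=1..n. (i-1) * ka i)
     * pT (\<lambda>i j. E q (be ka i - be ka j) * E q (be ka i - be ka j + 1)) n
     * (\<Prod>i=1..n. qpoch (w * (q^2) powi (1 - int i)) q (ka i) / qpoch (q^2) q (ka i + 2 * (n - i)))"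
proof -
  have inner: "(\<Prod>i\<in>{1..n}. \<Prod>j\<in>{i<..n}. qpoch (q powi (int (ka i) - int (ka j)) * (q^2)^(j-i)) q 2)
     = pT (\<lambda>i j. E q (be ka i - be ka j) * E q (be ka i - be ka j + 1)) n"
    unfolding pT_def by (rule prod.cong[OF refl], rule prod.cong[OF refl], rule EP_inner[OF q]) auto
  show ?thesis unfolding EP_def inner ..
qed

lemma pT_mult: "pT (\<lambda>i j. f i j * g i j) N = pT f N * (pT g N :: 'a::comm_monoid_mult)"
  unfolding pT_def by (simp add: prod.distrib)
lemma pU_mult: "pU (\<lambda>i j. f i j * g i j) N = pU f N * (pU g N :: 'a::comm_monoid_mult)"
  unfolding pU_def by (simp add: prod.distrib)
lemma pU_div: "pU (\<lambda>i j. f i j / g i j) N = pU f N / (pU g N :: real)"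
  unfolding pU_def by (simp add: prod_dividef)

lemma pU_diag: "pU F N = pT F N * (\<Prod>i\<in>{1..N}. (F i i :: 'a::comm_monoid_mult))"
proof -
  have "(\<Prod>j\<in>{i..N}. F i j) = (\<Prod>j\<in>{i<..N}. F i j) * F i i" if "i \<le> N" for i
  proof -
    have "{i..N} = insert i {i<..N}" using that by auto
    then show ?thesis by (simp add: mult.commute)
  qed
  then show ?thesis unfolding pU_def pT_def by (simp add: prod.distrib)
qed

lemma pU_shift: "pU (\<lambda>i j. F i (Suc j)) N = pT F N * (\<Prod>i\<in>{1..N}. (F i (Suc N) :: 'a::comm_monoid_mult))"
proof -
  have "(\<Prod>j\<in>{i..N}. F i (Suc j)) = (\<Prod>j\<in>{i<..N}. F i j) * F i (Suc N)" if "i \<le> N" for i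
  proof -
    have "(\<Prod>j\<in>{i..N}. F i (Suc j)) = (\<Prod>j\<in>{Suc i..Suc N}. F i j)"
      by (rule prod.shift_bounds_cl_Suc_ivl[symmetric])
    also have "\<dots> = (\<Prod>j\<in>{i<..Suc N}. F i j)" by (simp only: atLeastSucAtMost_greaterThanAtMost)
    also have "\<dots> = (\<Prod>j\<in>{i<..N}. F i j) * F i (Suc N)" using that by (rule prod_gt_Suc)
    finally show ?thesis .
  qed
  then show ?thesis unfolding pU_def pT_def by (simp add: prod.distrib)
qed

lemma pT_cong: "(\<And>i j. 1 \<le> i \<Longrightarrow> i < j \<Longrightarrow> j \<le> N \<Longrightarrow> F i j = G i j) \<Longrightarrow> pT F N = pT G N"
  unfolding pT_def by (intro prod.cong refl) auto
lemma pU_cong: "(\<And>i j. 1 \<le> i \<Longrightarrow> i \<le> j \<Longrightarrow> j \<le> N \<Longrightarrow> F i j = G i j) \<Longrightarrow> pU F N = pU G N"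
  unfolding pU_def by (intro prod.cong refl) auto

context ilace begin

lemma psi_atoms:
  assumes q: "0 < q" "q < 1"
  shows "psi q (q^2) mu ka =
    pU (\<lambda>i j. E q (al mu i - be ka j)) n * (pT (\<lambda>i j. E q (be ka i - al mu j)) n * (\<Prod>i\<in>{1..n}. E q (be ka i - al mu (Suc n))))
    / ((pT (\<lambda>i j. E q (be ka i - be ka j + 1)) n * E q 1 ^ n)
       * (pT (\<lambda>i j. E q (al mu i - al mu j - 1)) n * (\<Prod>i\<in>{1..n}. E q (al mu i - al mu (Suc n) - 1))))"
proof -
  have pp: "PP q = (\<lambda>i j. (E q (al mu i - be ka j) * E q (be ka i - al mu (Suc j)))
      / (E q (be ka i - be ka j + 1) * E q (al mu i - al mu (Suc j) - 1)))"
    by (intro ext) (simp only: PP_def)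
  have s1: "pU (\<lambda>i j. E q (be ka i - al mu (Suc j))) n = pT (\<lambda>i j. E q (be ka i - al mu j)) n * (\<Prod>i\<in>{1..n}. E q (be ka i - al mu (Suc n)))"
    by (rule pU_shift[where F="\<lambda>i j. E q (be ka i - al mu j)"])
  have s2: "pU (\<lambda>i j. E q (al mu i - al mu (Suc j) - 1)) n = pT (\<lambda>i j. E q (al mu i - al mu j - 1)) n * (\<Prod>i\<in>{1..n}. E q (al mu i - al mu (Suc n) - 1))"
    by (rule pU_shift[where F="\<lambda>i j. E q (al mu i - al mu j - 1)"])
  have s3: "pU (\<lambda>i j. E q (be ka i - be ka j + 1)) n = pT (\<lambda>i j. E q (be ka i - be ka j + 1)) n * E q 1 ^ n"
  proof -
    have "(\<Prod>i\<in>{1..n}. E q (be ka i - be ka i + 1)) = (\<Prod>i\<in>{1..n}. E q 1)" by simp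
    then show ?thesis unfolding pU_diag[where F="\<lambda>i j. E q (be ka i - be ka j + 1)"] by simp
  qed
  show ?thesis unfolding psi_eq[OF q] pp pU_div pU_mult s1 s2 s3 ..
qed

end




lemma pT_nz: "(\<And>i j. 1 \<le> i \<Longrightarrow> i < j \<Longrightarrow> j \<le> N \<Longrightarrow> F i j \<noteq> 0) \<Longrightarrow> pT F N \<noteq> (0::real)"
  unfolding pT_def by (auto simp: prod_zero_iff)

lemma prod_nz: "(\<And>i. 1 \<le> i \<Longrightarrow> i \<le> N \<Longrightarrow> F i \<noteq> 0) \<Longrightarrow> (\<Prod>i\<in>{1..(N::nat)}. F i) \<noteq> (0::real)"
  by (subst prod_zero_iff) auto

lemma pT_const: "pT (\<lambda>i j. c j) N = (\<Prod>j\<in>{1..N}. (c j :: 'a::comm_monoid_mult) ^ (j - 1))"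
proof (induction N)
  case 0 then show ?case by (simp add: pT_def)
next
  case (Suc N)
  have "pT (\<lambda>i j. c j) (Suc N) = pT (\<lambda>i j. c j) N * c (Suc N) ^ N" unfolding pT_Suc by simp
  then show ?case using Suc by (simp add: prod.cl_ivl_Suc)
qed

lemma E_one: "E q 1 = 1 - q" by (simp add: E_def)

lemma q2n: "((q::real)^2)^n = q powi (2 * int n)"
proof -
  have "(q^2)^n = q ^ (2 * n)" by (rule power_mult[symmetric])
  also have "\<dots> = q powi (int (2 * n))" by (rule power_int_of_nat[symmetric])
  also have "int (2 * n) = 2 * int n" by simp
  finally show ?thesis .
qed

lemma DQe:
  assumes q: "0 < q" "q < 1" and i: "1 \<le> i" "i \<le> n"
  shows "qpoch ((q^2)^n * (q^2) powi (1 - int i)) q m / qpoch q q (m + 2 * (n - i))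
       = E q (int (m + 2*n + 1 - 2*i)) / qpoch q q (2*n + 1 - 2*i)"
proof -
  have qnz: "q \<noteq> 0" using q by simp
  define a where "a = 2*n + 1 - 2*i"
  have b: "(q^2)^n * (q^2) powi (1 - int i) = q ^ Suc a"
    unfolding q2n PW[OF qnz] by (rule powi_nat) (use i in \<open>simp add: a_def\<close>)
  have k: "a + m = Suc (m + 2 * (n - i))" using i unfolding a_def by simp
  have e: "m + 2*n + 1 - 2*i = Suc (m + 2 * (n - i))" using i by simp
  have nz: "qpoch q q (m + 2 * (n - i)) \<noteq> 0" "qpoch q q a \<noteq> 0" using qpoch_qq_nz[OF q] by auto
  show ?thesis unfolding b qpoch_shift[OF q] k e qpoch_qq_Suc E_nat a_def[symmetric]
    using nz by (simp add: field_simps)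
qed

lemma DPe:
  assumes q: "0 < q" "q < 1" and i: "1 \<le> i" "i \<le> n"
  shows "qpoch (inverse q * (q^2)^n * (q^2) powi (1 - int i)) q k / qpoch (q^2) q (k + 2 * (n - i))
       = (1 - q) / (qpoch q q (2*n - 2*i) * E q (int (k + 2*n + 1 - 2*i)))"
proof -
  have qnz: "q \<noteq> 0" using q by simp
  define a where "a = 2*n - 2*i"
  have iq: "inverse q * (q^2)^n = q powi (2 * int n - 1)"
  proof -
    have "q powi (-1 + 2 * int n) = q powi (-1) * q powi (2 * int n)" by (rule power_int_add) (use qnz in simp)
    then show ?thesis unfolding q2n by (simp add: power_int_minus)
  qed
  have b: "inverse q * (q^2)^n * (q^2) powi (1 - int i) = q ^ Suc a"
    unfolding iq PW[OF qnz] by (rule powi_nat) (use i in \<open>simp add: a_def\<close>)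
  have k1: "k + 2 * (n - i) = k + a" unfolding a_def by simp
  have e: "k + 2*n + 1 - 2*i = Suc (k + a)" using i unfolding a_def by simp
  have ak: "a + k = k + a" by simp
  have "q ^ Suc (k + a) < 1" using q by (intro power_Suc_less_one) auto
  then have nz: "qpoch q q (k + a) \<noteq> 0" "qpoch q q a \<noteq> 0" "1 - q \<noteq> 0" "1 - q ^ Suc (k + a) \<noteq> 0"
    using qpoch_qq_nz[OF q] q by auto
  show ?thesis unfolding b qpoch_shift[OF q] k1 e qpoch_q2[OF q] qpoch_qq_Suc E_nat a_def[symmetric] ak
    using nz by (simp add: field_simps)
qed

lemma alg_even:
  fixes S1 S2 VAm VA VB VB1 DA DB C1 C2 AB BA e1 X :: real
  assumes "VAm \<noteq> 0" "VB1 \<noteq> 0" "DA \<noteq> 0" "DB \<noteq> 0" "C1 \<noteq> 0" "C2 \<noteq> 0" "e1 \<noteq> 0"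
  shows "(S1 * (VAm * VA) * (DA / C1)) * (S2 * (VB * VB1) * (e1 ^ n / (C2 * DB)))
        * (AB * (BA * DB) / ((VB1 * e1 ^ n) * (VAm * DA))) = S1 * S2 * (VA * VB * AB * BA) / (C1 * C2)"
  using assms by (simp add: field_simps)

context ilace begin

lemma core_even:
  assumes q: "0 < q" "q < 1"
  shows "EQ q (q^2) 2 n ((q^2)^n) mu * EP q (q^2) 2 n (inverse q * (q^2)^n) ka * psi q (q^2) mu ka
    = (q^2)^(\<Sum>i=1..n. (i-1) * mu i) * (q^2)^(\<Sum>i=1..n. (i-1) * ka i)
      * (pT (\<lambda>i j. E q (al mu i - al mu j)) n * pT (\<lambda>i j. E q (be ka i - be ka j)) n
         * pU (\<lambda>i j. E q (al mu i - be ka j)) n * pT (\<lambda>i j. E q (be ka i - al mu j)) n)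
      / ((\<Prod>i=1..n. qpoch q q (2*n + 1 - 2*i)) * (\<Prod>i=1..n. qpoch q q (2*n - 2*i)))"
proof -
  let ?DA = "\<Prod>i=1..n. E q (int (mu i + 2*n + 1 - 2*i))"
  let ?DB = "\<Prod>i=1..n. E q (int (ka i + 2*n + 1 - 2*i))"
  let ?C1 = "\<Prod>i=1..n. qpoch q q (2*n + 1 - 2*i)"
  let ?C2 = "\<Prod>i=1..n. qpoch q q (2*n - 2*i)"
  have mz: "mu (Suc n) = 0" using z by simp
  have dq: "(\<Prod>i=1..n. qpoch ((q^2)^n * (q^2) powi (1 - int i)) q (mu i) / qpoch q q (mu i + 2 * (n - i))) = ?DA / ?C1"
    by (subst prod_dividef[symmetric], rule prod.cong[OF refl], rule DQe[OF q]) auto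
  have dp: "(\<Prod>i=1..n. qpoch (inverse q * (q^2)^n * (q^2) powi (1 - int i)) q (ka i) / qpoch (q^2) q (ka i + 2 * (n - i)))
      = (1 - q) ^ n / (?C2 * ?DB)"
  proof -
    have "(\<Prod>i=1..n. qpoch (inverse q * (q^2)^n * (q^2) powi (1 - int i)) q (ka i) / qpoch (q^2) q (ka i + 2 * (n - i)))
      = (\<Prod>i=1..n. (1 - q) / (qpoch q q (2*n - 2*i) * E q (int (ka i + 2*n + 1 - 2*i))))"
      by (rule prod.cong[OF refl], rule DPe[OF q]) auto
    also have "\<dots> = (1 - q) ^ n / (?C2 * ?DB)" by (simp add: prod_dividef prod.distrib)
    finally show ?thesis .
  qed
  have da: "(\<Prod>i\<in>{1..n}. E q (al mu i - al mu (Suc n) - 1)) = ?DA"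
  proof (rule prod.cong[OF refl])
    fix i assume "i \<in> {1..n}"
    then have "al mu i - al mu (Suc n) - 1 = int (mu i + 2*n + 1 - 2*i)" using mz by (simp add: al_def)
    then show "E q (al mu i - al mu (Suc n) - 1) = E q (int (mu i + 2*n + 1 - 2*i))" by simp
  qed
  have db: "(\<Prod>i\<in>{1..n}. E q (be ka i - al mu (Suc n))) = ?DB"
  proof (rule prod.cong[OF refl])
    fix i assume "i \<in> {1..n}"
    then have "be ka i - al mu (Suc n) = int (ka i + 2*n + 1 - 2*i)" using mz by (simp add: al_def be_def)
    then show "E q (be ka i - al mu (Suc n)) = E q (int (ka i + 2*n + 1 - 2*i))" by simp
  qed
  have nzVAm: "pT (\<lambda>i j. E q (al mu i - al mu j - 1)) n \<noteq> 0"
  proof (rule pT_nz)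
    fix i j assume "1 \<le> i" "i < j" "j \<le> n"
    then have "mu j \<le> mu i" using mono_mu by simp
    then have "al mu i - al mu j - 1 > 0" using \<open>i < j\<close> by (simp add: al_def)
    then show "E q (al mu i - al mu j - 1) \<noteq> 0" using E_nz q by simp
  qed
  have nzVB1: "pT (\<lambda>i j. E q (be ka i - be ka j + 1)) n \<noteq> 0"
  proof (rule pT_nz)
    fix i j assume "1 \<le> i" "i < j" "j \<le> n"
    then have "ka j \<le> ka i" using mono_ka by simp
    then have "be ka i - be ka j + 1 > 0" using \<open>i < j\<close> by (simp add: be_def)
    then show "E q (be ka i - be ka j + 1) \<noteq> 0" using E_nz q by simp
  qed
  have nzDA: "?DA \<noteq> 0" by (rule prod_nz, rule E_nz) (use q in auto)
  have nzDB: "?DB \<noteq> 0" by (rule prod_nz, rule E_nz) (use q in auto)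
  have nzC1: "?C1 \<noteq> 0" by (rule prod_nz, rule qpoch_qq_nz[OF q])
  have nzC2: "?C2 \<noteq> 0" by (rule prod_nz, rule qpoch_qq_nz[OF q])
  have nze: "1 - q \<noteq> 0" using q by simp
  show ?thesis
    unfolding EQ_exp[OF q(1)] EP_exp[OF q(1)] psi_atoms[OF q] pT_mult dq dp da db E_one
    by (rule alg_even[OF nzVAm nzVB1 nzDA nzDB nzC1 nzC2 nze])
qed

end

lemma vdm_even:
  assumes q: "0 < q"
    and ho: "\<And>j. j \<in> {1..n} \<Longrightarrow> h (2 * j - 1) = al mu j + 2 * int n + 1"
    and he: "\<And>j. j \<in> {1..n} \<Longrightarrow> h (2 * j) = be ka j + 2 * int n + 1"
  shows "pT (\<lambda>i j. q powi h j - q powi h i) (2 * n) = (\<Prod>j\<in>{1..2*n}. (q powi h j) ^ (j - 1))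
    * (pT (\<lambda>i j. E q (al mu i - al mu j)) n * pT (\<lambda>i j. E q (be ka i - be ka j)) n
         * pU (\<lambda>i j. E q (al mu i - be ka j)) n * pT (\<lambda>i j. E q (be ka i - al mu j)) n)"
proof -
  have qnz: "q \<noteq> 0" using q by simp
  have f: "q powi h j - q powi h i = q powi h j * E q (h i - h j)" for i j
    unfolding E_def using qnz by (simp add: power_int_diff[OF disjI1[OF qnz]] right_diff_distrib)
  have A: "pT (\<lambda>i j. q powi h j - q powi h i) (2 * n) = pT (\<lambda>i j. q powi h j) (2*n) * pT (\<lambda>i j. E q (h i - h j)) (2*n)"
    unfolding f pT_mult ..
  have hh: "h (2*i-1) = al mu i + 2 * int n + 1" "h (2*j-1) = al mu j + 2 * int n + 1"
     "h (2*i) = be ka i + 2 * int n + 1" "h (2*j) = be ka j + 2 * int n + 1"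
    if "1 \<le> i" "i \<le> j" "j \<le> n" for i j using ho he that by auto
  have B1: "pT (\<lambda>i j. E q (h (2*i-1) - h (2*j-1)) * E q (h (2*i) - h (2*j))) n
      = pT (\<lambda>i j. E q (al mu i - al mu j)) n * pT (\<lambda>i j. E q (be ka i - be ka j)) n"
    unfolding pT_mult[symmetric]
  proof (rule pT_cong)
    fix i j assume a: "1 \<le> i" "i < j" "j \<le> n"
    show "E q (h (2*i-1) - h (2*j-1)) * E q (h (2*i) - h (2*j)) = E q (al mu i - al mu j) * E q (be ka i - be ka j)"
      unfolding hh[of i j, OF a(1) less_imp_le[OF a(2)] a(3)] by simp
  qed
  have B2: "pU (\<lambda>i j. E q (h (2*i-1) - h (2*j))) n = pU (\<lambda>i j. E q (al mu i - be ka j)) n"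
  proof (rule pU_cong)
    fix i j assume a: "1 \<le> i" "i \<le> j" "j \<le> n"
    show "E q (h (2*i-1) - h (2*j)) = E q (al mu i - be ka j)"
      unfolding hh[of i j, OF a] by simp
  qed
  have B3: "pT (\<lambda>i j. E q (h (2*i) - h (2*j-1))) n = pT (\<lambda>i j. E q (be ka i - al mu j)) n"
  proof (rule pT_cong)
    fix i j assume a: "1 \<le> i" "i < j" "j \<le> n"
    show "E q (h (2*i) - h (2*j-1)) = E q (be ka i - al mu j)"
      unfolding hh[of i j, OF a(1) less_imp_le[OF a(2)] a(3)] by simp
  qed
  show ?thesis unfolding A pT_const pT_split_even[where F="\<lambda>i j. E q (h i - h j)"] B1 B2 B3
    by (simp only: mult_ac)
qed




lemma DQo:
  assumes q: "0 < q" "q < 1" and i: "1 \<le> i" "i \<le> n"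
  shows "qpoch (q * (q^2)^(n-1) * (q^2) powi (1 - int i)) q m / qpoch q q (m + 2 * (n - i))
       = 1 / qpoch q q (2*n - 2*i)"
proof -
  have qnz: "q \<noteq> 0" using q by simp
  define a where "a = 2*n - 2*i"
  have iq: "q * (q^2)^(n-1) = q powi (2 * int n - 1)"
  proof -
    have "q powi (1 + 2 * int (n - 1)) = q powi 1 * q powi (2 * int (n - 1))" by (rule power_int_add) (use qnz in simp)
    moreover have "1 + 2 * int (n - 1) = 2 * int n - 1" using i by simp
    ultimately show ?thesis unfolding q2n by simp
  qed
  have b: "q * (q^2)^(n-1) * (q^2) powi (1 - int i) = q ^ Suc a"
    unfolding iq PW[OF qnz] by (rule powi_nat) (use i in \<open>simp add: a_def\<close>)
  have k: "m + 2 * (n - i) = a + m" unfolding a_def by simp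
  have nz: "qpoch q q (a + m) \<noteq> 0" "qpoch q q a \<noteq> 0" using qpoch_qq_nz[OF q] by auto
  show ?thesis unfolding b qpoch_shift[OF q] k a_def[symmetric]
    using nz by (simp add: field_simps)
qed

lemma alg_dpo: "(P::real) \<noteq> 0 \<Longrightarrow> A \<noteq> 0 \<Longrightarrow> c \<noteq> 0 \<Longrightarrow> X \<noteq> 0 \<Longrightarrow> Y \<noteq> 0 \<Longrightarrow>
   (P / A) / (P * X * Y / c) = c / (A * (X * Y))"
  by (simp add: field_simps)

lemma DPo:
  assumes q: "0 < q" "q < 1" and i: "1 \<le> i" "i < n"
  shows "qpoch ((q^2)^(n-1) * (q^2) powi (1 - int i)) q k / qpoch (q^2) q (k + 2 * (n - i))
       = (1 - q) / (qpoch q q (2*n - 2*i - 1) * (E q (int (k + 2*n - 2*i)) * E q (int (k + 2*n - 2*i + 1))))"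
proof -
  have qnz: "q \<noteq> 0" using q by simp
  define a where "a = 2*n - 2*i - 1"
  have iq: "(q^2)^(n-1) = q powi (2 * int n - 2)"
    unfolding q2n using i by simp
  have b: "(q^2)^(n-1) * (q^2) powi (1 - int i) = q ^ Suc a"
    unfolding iq PW[OF qnz] by (rule powi_nat) (use i in \<open>simp add: a_def\<close>)
  have k1: "k + 2 * (n - i) = Suc (k + a)" using i unfolding a_def by simp
  have e1: "k + 2*n - 2*i = Suc (k + a)" "Suc (k + a) + 1 = Suc (Suc (k + a))" using i unfolding a_def by simp_all
  have ak: "a + k = k + a" by simp
  have "q ^ Suc (k + a) < 1" "q ^ Suc (Suc (k + a)) < 1" using q by (intro power_Suc_less_one; simp)+
  then have nz: "qpoch q q (k + a) \<noteq> 0" "qpoch q q a \<noteq> 0" "1 - q \<noteq> 0" "1 - q ^ Suc (k + a) \<noteq> 0"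
     "1 - q ^ Suc (Suc (k + a)) \<noteq> 0"
    using qpoch_qq_nz[OF q] q by auto
  have S: "qpoch q q (Suc (Suc (k + a))) = qpoch q q (k + a) * (1 - q ^ Suc (k + a)) * (1 - q ^ Suc (Suc (k + a)))"
    by (simp only: qpoch_qq_Suc)
  show ?thesis unfolding b qpoch_shift[OF q] k1 e1 qpoch_q2[OF q] S E_nat a_def[symmetric] ak
    by (rule alg_dpo) (use nz in auto)
qed

lemma alg_odd:
  fixes S1 S2 VAm VA VBm DB1 VB1m DB2 C1 C2 ABm DAs BA e1 :: real
  assumes "VAm \<noteq> 0" "VB1m \<noteq> 0" "DAs \<noteq> 0" "DB1 \<noteq> 0" "DB2 \<noteq> 0" "C1 \<noteq> 0" "C2 \<noteq> 0" "e1 \<noteq> 0"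
  shows "(S1 * (VAm * VA) * (1 / C1)) * (S2 * ((VBm * DB1) * (VB1m * DB2)) * (e1 ^ m / (C2 * (DB1 * DB2)) * 1))
        * ((ABm * DAs) * (BA * (DB2 * e1)) / ((VB1m * DB2 * e1 ^ Suc m) * (VAm * DAs)))
      = S1 * S2 * (VA * VBm * ABm * BA) / (C1 * C2)"
  using assms by (simp add: field_simps)

context ilace begin

lemma core_odd:
  assumes q: "0 < q" "q < 1" and nm: "n = Suc m" and kn: "ka n = 0"
  shows "EQ q (q^2) 2 n (q * (q^2)^(n-1)) mu * EP q (q^2) 2 n ((q^2)^(n-1)) ka * psi q (q^2) mu ka
    = (q^2)^(\<Sum>i=1..n. (i-1) * mu i) * (q^2)^(\<Sum>i=1..n. (i-1) * ka i)
      * (pT (\<lambda>i j. E q (al mu i - al mu j)) n * pT (\<lambda>i j. E q (be ka i - be ka j)) m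
         * pU (\<lambda>i j. E q (al mu i - be ka j)) m * pT (\<lambda>i j. E q (be ka i - al mu j)) n)
      / ((\<Prod>i=1..n. qpoch q q (2*n - 2*i)) * (\<Prod>i=1..m. qpoch q q (2*n - 2*i - 1)))"
proof -
  let ?DAs = "\<Prod>i\<in>{1..n}. E q (al mu i - al mu (Suc n) - 1)"
  let ?DB1 = "\<Prod>i=1..m. E q (int (ka i + 2*n - 2*i))"
  let ?DB2 = "\<Prod>i=1..m. E q (int (ka i + 2*n - 2*i + 1))"
  let ?C1 = "\<Prod>i=1..n. qpoch q q (2*n - 2*i)"
  let ?C2 = "\<Prod>i=1..m. qpoch q q (2*n - 2*i - 1)"
  have mz: "mu (Suc n) = 0" using z by simp
  have dq: "(\<Prod>i=1..n. qpoch (q * (q^2)^(n-1) * (q^2) powi (1 - int i)) q (mu i) / qpoch q q (mu i + 2 * (n - i))) = 1 / ?C1"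
  proof -
    have "(\<Prod>i=1..n. qpoch (q * (q^2)^(n-1) * (q^2) powi (1 - int i)) q (mu i) / qpoch q q (mu i + 2 * (n - i)))
        = (\<Prod>i=1..n. 1 / qpoch q q (2*n - 2*i))"
      by (rule prod.cong[OF refl], rule DQo[OF q]) auto
    then show ?thesis by (simp add: prod_dividef)
  qed
  have dp: "(\<Prod>i=1..n. qpoch ((q^2)^(n-1) * (q^2) powi (1 - int i)) q (ka i) / qpoch (q^2) q (ka i + 2 * (n - i)))
      = (1 - q) ^ m / (?C2 * (?DB1 * ?DB2)) * 1"
  proof -
    have "(\<Prod>i=1..n. qpoch ((q^2)^(n-1) * (q^2) powi (1 - int i)) q (ka i) / qpoch (q^2) q (ka i + 2 * (n - i)))
       = (\<Prod>i=1..m. qpoch ((q^2)^(n-1) * (q^2) powi (1 - int i)) q (ka i) / qpoch (q^2) q (ka i + 2 * (n - i)))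
         * (qpoch ((q^2)^(n-1) * (q^2) powi (1 - int n)) q (ka n) / qpoch (q^2) q (ka n + 2 * (n - n)))"
      unfolding nm by (simp add: prod.cl_ivl_Suc)
    also have "(qpoch ((q^2)^(n-1) * (q^2) powi (1 - int n)) q (ka n) / qpoch (q^2) q (ka n + 2 * (n - n))) = 1"
      unfolding kn by (simp add: qpoch_def)
    also have "(\<Prod>i=1..m. qpoch ((q^2)^(n-1) * (q^2) powi (1 - int i)) q (ka i) / qpoch (q^2) q (ka i + 2 * (n - i)))
       = (\<Prod>i=1..m. (1 - q) / (qpoch q q (2*n - 2*i - 1) * (E q (int (ka i + 2*n - 2*i)) * E q (int (ka i + 2*n - 2*i + 1)))))"
      by (rule prod.cong[OF refl], rule DPo[OF q]) (auto simp: nm)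
    also have "\<dots> = (1 - q) ^ m / (?C2 * (?DB1 * ?DB2))" by (simp add: prod_dividef prod.distrib)
    finally show ?thesis .
  qed
  have ben: "be ka n = - 2 * int n - 1" using kn by (simp add: be_def)
  have vb: "pT (\<lambda>i j. E q (be ka i - be ka j)) n = pT (\<lambda>i j. E q (be ka i - be ka j)) m * ?DB1"
  proof -
    have "pT (\<lambda>i j. E q (be ka i - be ka j)) n = pT (\<lambda>i j. E q (be ka i - be ka j)) m * (\<Prod>i=1..m. E q (be ka i - be ka n))"
      unfolding nm pT_Suc ..
    also have "(\<Prod>i=1..m. E q (be ka i - be ka n)) = ?DB1"
    proof (rule prod.cong[OF refl])
      fix i assume "i \<in> {1..m}"
      then have "be ka i - be ka n = int (ka i + 2*n - 2*i)" using ben nm by (simp add: be_def)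
      then show "E q (be ka i - be ka n) = E q (int (ka i + 2*n - 2*i))" by (rule arg_cong[where f="E q"])
    qed
    finally show ?thesis .
  qed
  have vb1: "pT (\<lambda>i j. E q (be ka i - be ka j + 1)) n = pT (\<lambda>i j. E q (be ka i - be ka j + 1)) m * ?DB2"
  proof -
    have "pT (\<lambda>i j. E q (be ka i - be ka j + 1)) n = pT (\<lambda>i j. E q (be ka i - be ka j + 1)) m * (\<Prod>i=1..m. E q (be ka i - be ka n + 1))"
      unfolding nm pT_Suc ..
    also have "(\<Prod>i=1..m. E q (be ka i - be ka n + 1)) = ?DB2"
    proof (rule prod.cong[OF refl])
      fix i assume "i \<in> {1..m}"
      then have "be ka i - be ka n + 1 = int (ka i + 2*n - 2*i + 1)" using ben nm by (simp add: be_def)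
      then show "E q (be ka i - be ka n + 1) = E q (int (ka i + 2*n - 2*i + 1))" by (rule arg_cong[where f="E q"])
    qed
    finally show ?thesis .
  qed
  have ab: "pU (\<lambda>i j. E q (al mu i - be ka j)) n = pU (\<lambda>i j. E q (al mu i - be ka j)) m * ?DAs"
  proof -
    have "pU (\<lambda>i j. E q (al mu i - be ka j)) n = pU (\<lambda>i j. E q (al mu i - be ka j)) m * (\<Prod>i\<in>{1..n}. E q (al mu i - be ka n))"
      unfolding nm pU_Suc ..
    also have "(\<Prod>i\<in>{1..n}. E q (al mu i - be ka n)) = ?DAs"
    proof (rule prod.cong[OF refl])
      fix i assume "i \<in> {1..n}"
      have "al mu i - be ka n = al mu i - al mu (Suc n) - 1" using ben mz by (simp add: al_def)
      then show "E q (al mu i - be ka n) = E q (al mu i - al mu (Suc n) - 1)" by (rule arg_cong[where f="E q"])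
    qed
    finally show ?thesis .
  qed
  have dbs: "(\<Prod>i\<in>{1..n}. E q (be ka i - al mu (Suc n))) = ?DB2 * E q 1"
  proof -
    have "(\<Prod>i\<in>{1..n}. E q (be ka i - al mu (Suc n))) = (\<Prod>i\<in>{1..m}. E q (be ka i - al mu (Suc n))) * E q (be ka n - al mu (Suc n))"
      unfolding nm by (simp add: prod.cl_ivl_Suc)
    also have "be ka n - al mu (Suc n) = 1" using ben mz by (simp add: al_def)
    also have "(\<Prod>i\<in>{1..m}. E q (be ka i - al mu (Suc n))) = ?DB2"
    proof (rule prod.cong[OF refl])
      fix i assume "i \<in> {1..m}"
      then have "be ka i - al mu (Suc n) = int (ka i + 2*n - 2*i + 1)" using mz nm by (simp add: al_def be_def)
      then show "E q (be ka i - al mu (Suc n)) = E q (int (ka i + 2*n - 2*i + 1))" by (rule arg_cong[where f="E q"])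
    qed
    finally show ?thesis .
  qed
  have nzVAm: "pT (\<lambda>i j. E q (al mu i - al mu j - 1)) n \<noteq> 0"
  proof (rule pT_nz)
    fix i j assume "1 \<le> i" "i < j" "j \<le> n"
    then have "mu j \<le> mu i" using mono_mu by simp
    then have "al mu i - al mu j - 1 > 0" using \<open>i < j\<close> by (simp add: al_def)
    then show "E q (al mu i - al mu j - 1) \<noteq> 0" using E_nz q by simp
  qed
  have nzVB1: "pT (\<lambda>i j. E q (be ka i - be ka j + 1)) m \<noteq> 0"
  proof (rule pT_nz)
    fix i j assume "1 \<le> i" "i < j" "j \<le> m"
    then have "ka j \<le> ka i" using mono_ka by simp
    then have "be ka i - be ka j + 1 > 0" using \<open>i < j\<close> by (simp add: be_def)
    then show "E q (be ka i - be ka j + 1) \<noteq> 0" using E_nz q by simp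
  qed
  have nzDAs: "?DAs \<noteq> 0"
  proof (rule prod_nz, rule E_nz)
    fix i assume "1 \<le> i" "i \<le> n"
    then show "0 < al mu i - al mu (Suc n) - 1" using mz by (simp add: al_def)
  qed (use q in auto)
  have nzDB1: "?DB1 \<noteq> 0" by (rule prod_nz, rule E_nz) (use q nm in auto)
  have nzDB2: "?DB2 \<noteq> 0" by (rule prod_nz, rule E_nz) (use q nm in auto)
  have nzC1: "?C1 \<noteq> 0" by (rule prod_nz, rule qpoch_qq_nz[OF q])
  have nzC2: "?C2 \<noteq> 0" by (rule prod_nz, rule qpoch_qq_nz[OF q])
  have nze: "1 - q \<noteq> 0" using q by simp
  have en: "(1 - q) ^ n = (1 - q) ^ Suc m" unfolding nm ..
  show ?thesis
    unfolding EQ_exp[OF q(1)] EP_exp[OF q(1)] psi_atoms[OF q] pT_mult dq dp vb vb1 ab dbs E_one en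
    by (rule alg_odd[OF nzVAm nzVB1 nzDAs nzDB1 nzDB2 nzC1 nzC2 nze])
qed

end

lemma vdm_odd:
  assumes q: "0 < q"
    and ho: "\<And>j. j \<in> {1..Suc m} \<Longrightarrow> h (2 * j - 1) = al mu j + 2 * int (Suc m)"
    and he: "\<And>j. j \<in> {1..m} \<Longrightarrow> h (2 * j) = be ka j + 2 * int (Suc m)"
  shows "pT (\<lambda>i j. q powi h j - q powi h i) (Suc (2 * m)) = (\<Prod>j\<in>{1..Suc (2*m)}. (q powi h j) ^ (j - 1))
    * (pT (\<lambda>i j. E q (al mu i - al mu j)) (Suc m) * pT (\<lambda>i j. E q (be ka i - be ka j)) m
         * pU (\<lambda>i j. E q (al mu i - be ka j)) m * pT (\<lambda>i j. E q (be ka i - al mu j)) (Suc m))"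
proof -
  have qnz: "q \<noteq> 0" using q by simp
  have f: "q powi h j - q powi h i = q powi h j * E q (h i - h j)" for i j
    unfolding E_def using qnz by (simp add: power_int_diff[OF disjI1[OF qnz]] right_diff_distrib)
  have A: "pT (\<lambda>i j. q powi h j - q powi h i) (Suc (2 * m)) = pT (\<lambda>i j. q powi h j) (Suc (2*m)) * pT (\<lambda>i j. E q (h i - h j)) (Suc (2*m))"
    unfolding f pT_mult ..
  have B1: "pT (\<lambda>i j. E q (h (2*i-1) - h (2*j-1))) (Suc m) = pT (\<lambda>i j. E q (al mu i - al mu j)) (Suc m)"
  proof (rule pT_cong)
    fix i j assume a: "1 \<le> i" "i < j" "j \<le> Suc m"
    have hh: "h (2*i-1) = al mu i + 2 * int (Suc m)" "h (2*j-1) = al mu j + 2 * int (Suc m)" using ho a by auto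
    show "E q (h (2*i-1) - h (2*j-1)) = E q (al mu i - al mu j)" unfolding hh by simp
  qed
  have B2: "pT (\<lambda>i j. E q (h (2*i) - h (2*j))) m = pT (\<lambda>i j. E q (be ka i - be ka j)) m"
  proof (rule pT_cong)
    fix i j assume a: "1 \<le> i" "i < j" "j \<le> m"
    have hh: "h (2*i) = be ka i + 2 * int (Suc m)" "h (2*j) = be ka j + 2 * int (Suc m)" using he a by auto
    show "E q (h (2*i) - h (2*j)) = E q (be ka i - be ka j)" unfolding hh by simp
  qed
  have B3: "pU (\<lambda>i j. E q (h (2*i-1) - h (2*j))) m = pU (\<lambda>i j. E q (al mu i - be ka j)) m"
  proof (rule pU_cong)
    fix i j assume a: "1 \<le> i" "i \<le> j" "j \<le> m"
    have hh: "h (2*i-1) = al mu i + 2 * int (Suc m)" "h (2*j) = be ka j + 2 * int (Suc m)" using ho he a by auto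
    show "E q (h (2*i-1) - h (2*j)) = E q (al mu i - be ka j)" unfolding hh by simp
  qed
  have B4: "pT (\<lambda>i j. E q (h (2*i) - h (2*j-1))) (Suc m) = pT (\<lambda>i j. E q (be ka i - al mu j)) (Suc m)"
  proof (rule pT_cong)
    fix i j assume a: "1 \<le> i" "i < j" "j \<le> Suc m"
    have hh: "h (2*i) = be ka i + 2 * int (Suc m)" "h (2*j-1) = al mu j + 2 * int (Suc m)" using ho he a by auto
    show "E q (h (2*i) - h (2*j-1)) = E q (be ka i - al mu j)" unfolding hh by simp
  qed
  show ?thesis unfolding A pT_const pT_split_odd[where F="\<lambda>i j. E q (h i - h j)"] B1 B2 B3 B4
    by (simp only: mult_ac)
qed

lemma prod_rev0: "(\<Prod>l\<in>{0..<(M::nat)}. g l) = (\<Prod>k\<in>{1..M}. (g (M - k) :: 'a::comm_monoid_mult))"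
  by (rule prod.reindex_bij_witness[where i="\<lambda>k. M - k" and j="\<lambda>l. M - l"]) auto

lemma consts_even:
  assumes q: "0 < q" "q < 1"
  shows "(\<Prod>l=1..2*n-1. qpoch q q l) = (\<Prod>i=1..n. qpoch q q (2*n + 1 - 2*i)) * (\<Prod>i=1..n. qpoch q q (2*n - 2*i))"
proof (cases "n = 0")
  case True then show ?thesis by simp
next
  case False
  have "(\<Prod>l\<in>{0..<2*n}. qpoch q q l) = qpoch q q 0 * (\<Prod>l=1..2*n-1. qpoch q q l)"
  proof -
    have "{0..<2*n} = insert 0 {1..2*n-1}" using False by auto
    then show ?thesis by simp
  qed
  then have "(\<Prod>l=1..2*n-1. qpoch q q l) = (\<Prod>l\<in>{0..<2*n}. qpoch q q l)" by (simp add: qpoch_def)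
  also have "\<dots> = (\<Prod>k\<in>{1..2*n}. qpoch q q (2*n - k))" by (rule prod_rev0)
  also have "\<dots> = (\<Prod>i\<in>{1..n}. qpoch q q (2*n - (2*i - 1)) * qpoch q q (2*n - 2*i))" by (rule prod_split2)
  also have "\<dots> = (\<Prod>i\<in>{1..n}. qpoch q q (2*n + 1 - 2*i) * qpoch q q (2*n - 2*i))"
    by (rule prod.cong[OF refl]) (simp add: Suc_diff_le)
  finally show ?thesis by (simp add: prod.distrib)
qed

lemma consts_odd:
  assumes q: "0 < q" "q < 1"
  shows "(\<Prod>l=1..2*Suc m-1-1. qpoch q q l) = (\<Prod>i=1..Suc m. qpoch q q (2*Suc m - 2*i)) * (\<Prod>i=1..m. qpoch q q (2*Suc m - 2*i - 1))"
proof -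
  have "(\<Prod>l\<in>{0..<2*m+1}. qpoch q q l) = qpoch q q 0 * (\<Prod>l=1..2*m. qpoch q q l)"
  proof -
    have "{0..<2*m+1} = insert 0 {1..2*m}" by auto
    then show ?thesis by simp
  qed
  then have "(\<Prod>l=1..2*Suc m-1-1. qpoch q q l) = (\<Prod>l\<in>{0..<2*m+1}. qpoch q q l)" by (simp add: qpoch_def)
  also have "\<dots> = (\<Prod>k\<in>{1..2*m+1}. qpoch q q (2*m+1 - k))" by (rule prod_rev0)
  also have "\<dots> = (\<Prod>k\<in>{1..2*m}. qpoch q q (2*m+1 - k)) * qpoch q q 0" by simp
  also have "(\<Prod>k\<in>{1..2*m}. qpoch q q (2*m+1 - k)) = (\<Prod>i\<in>{1..m}. qpoch q q (2*m+1 - (2*i - 1)) * qpoch q q (2*m+1 - 2*i))"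
    by (rule prod_split2)
  also have "\<dots> = (\<Prod>i\<in>{1..m}. qpoch q q (2*Suc m - 2*i) * qpoch q q (2*Suc m - 2*i - 1))"
    by (rule prod.cong[OF refl]) (simp add: Suc_diff_le)
  also have "(\<Prod>i=1..Suc m. qpoch q q (2*Suc m - 2*i)) = (\<Prod>i=1..m. qpoch q q (2*Suc m - 2*i)) * qpoch q q 0"
    by (simp add: prod.cl_ivl_Suc)
  ultimately show ?thesis by (simp add: prod.distrib qpoch_def)
qed




lemma qpinf_factor_nz:
  fixes q x :: real assumes q: "\<bar>q\<bar> < 1" and nz: "qpinf x q \<noteq> 0"
  shows "1 - x * q ^ i \<noteq> 0"
proof
  assume h: "1 - x * q ^ i = 0"
  have "qpinf x q = qpoch x q (Suc i) * qpinf (x * q ^ Suc i) q" by (rule qpinf_split[OF q])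
  also have "qpoch x q (Suc i) = 0" using h by (simp add: qpoch_def)
  finally show False using nz by simp
qed

lemma qpoch_shiftx: "qpoch (x * q ^ e) q a = (\<Prod>i<a. 1 - x * q ^ (e + i))"
  unfolding qpoch_def by (simp add: power_add mult.assoc)

lemma Y_lim:
  fixes q :: real assumes q: "0 < q" "q < 1"
  shows "(\<lambda>p. qpoch (x * q ^ (2 * p)) q L) \<longlonglongrightarrow> 1"
proof -
  have q2: "(\<lambda>p. (q^2) ^ p) \<longlonglongrightarrow> 0" using q by (intro LIMSEQ_power_zero) (simp add: abs_less_iff power_less_one_iff)
  have "(\<lambda>p. \<Prod>i<L. 1 - x * (q^2) ^ p * q ^ i) \<longlonglongrightarrow> (\<Prod>i<L. 1 - x * 0 * q ^ i)"
    by (intro tendsto_prod tendsto_diff tendsto_const tendsto_mult q2)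
  moreover have "(\<lambda>p. \<Prod>i<L. 1 - x * (q^2) ^ p * q ^ i) = (\<lambda>p. qpoch (x * q ^ (2 * p)) q L)"
    unfolding qpoch_def by (simp add: power_mult)
  ultimately show ?thesis by simp
qed

lemma alg_fp: "(B::real) \<noteq> 0 \<Longrightarrow> C \<noteq> 0 \<Longrightarrow> 1 - x \<noteq> 0 \<Longrightarrow>
  Yp * (1 - x) * B * C / (B * ((1 - x) * Yq * C)) = Yp / Yq"
proof -
  assume a: "B \<noteq> 0" "C \<noteq> 0" "1 - x \<noteq> 0"
  have K: "(1 - x) * B * C \<noteq> 0" using a by simp
  have "Yp * (1 - x) * B * C / (B * ((1 - x) * Yq * C)) = (Yp * ((1 - x) * B * C)) / (Yq * ((1 - x) * B * C))"
    by (simp only: mult_ac)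
  also have "\<dots> = Yp / Yq" using K by (rule nonzero_mult_divide_mult_cancel_right)
  finally show ?thesis .
qed

lemma prodinf_even:
  fixes q t w z z1 z2 :: real
  assumes q: "0 < q" "q < 1" and t: "t = q^2" and n: "n \<ge> 1" and w: "w = inverse q * t ^ n"
    and z1: "z1 = z" and z2: "z2 = q * z"
    and nz: "\<And>p. qpinf (z1 * z2 * t ^ p) q \<noteq> 0" "\<And>p. qpinf (w * z1 * z2 * t ^ p) q \<noteq> 0"
    and cv: "convergent_prod (\<lambda>p. qpinf (z1 * z2 * t ^ p) q * qpinf (w * z1 * z2 * t ^ (p + n)) q
             / (qpinf (z1 * z2 * t ^ (p + n)) q * qpinf (w * z1 * z2 * t ^ p) q))"
  shows "(\<Prod>p. qpinf (z1 * z2 * t ^ p) q * qpinf (w * z1 * z2 * t ^ (p + n)) q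
             / (qpinf (z1 * z2 * t ^ (p + n)) q * qpinf (w * z1 * z2 * t ^ p) q))
       = pT (\<lambda>i j. 1 - z ^ 2 * q ^ (i + j - 2)) (2 * n)"
proof -
  have aq: "\<bar>q\<bar> < 1" using q by simp
  define Z where "Z = z1 * z2"
  define X where "X e = Z * q ^ e" for e
  have tp: "z1 * z2 * t ^ p = X (2 * p)" for p unfolding X_def Z_def t by (simp add: power_mult)
  have wn: "w = q ^ (2 * n - 1)"
  proof -
    have "q ^ (2 * n) = q * q ^ (2 * n - 1)" using n by (simp flip: power_Suc)
    then show ?thesis unfolding w t using q by (simp add: power_mult[symmetric])
  qed
  obtain k where k1: "2 * n - 1 = k" and k2: "2 * n = Suc k" using n by (intro that[of "2 * n - 1"]) auto
  have wp: "w * z1 * z2 * t ^ p = X (2 * p + k)" for p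
    unfolding X_def Z_def wn t k1 by (simp add: power_mult[symmetric] power_add mult_ac)
  have Xs: "X e * q ^ a = X (e + a)" for e a unfolding X_def by (simp add: power_add mult.assoc)
  have Xnz: "1 - X e \<noteq> 0" for e
    using qpinf_factor_nz[OF aq nz(1)[of 0], of e] unfolding X_def Z_def by simp
  define Y where "Y p = qpoch (X (2 * p)) q k" for p
  have Ynz: "Y p \<noteq> 0" for p
    unfolding Y_def qpoch_def using Xnz Xs by (simp add: prod_zero_iff)
  have Y1: "Y \<longlonglongrightarrow> 1"
  proof -
    have "(\<lambda>p. qpoch (Z * q ^ (2 * p)) q k) \<longlonglongrightarrow> 1" by (rule Y_lim[OF q])
    then show ?thesis unfolding Y_def X_def .
  qed
  have sp1: "qpinf (X e) q = qpoch (X e) q (Suc k) * qpinf (X (e + Suc k)) q" for e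
    using qpinf_split[OF aq, of "X e" "Suc k"] unfolding Xs .
  have fp: "qpinf (z1 * z2 * t ^ p) q * qpinf (w * z1 * z2 * t ^ (p + n)) q
             / (qpinf (z1 * z2 * t ^ (p + n)) q * qpinf (w * z1 * z2 * t ^ p) q) = Y p / Y (p + n)" for p
  proof -
    have e1: "2 * (p + n) = 2 * p + Suc k" "2 * p + Suc k + k = 2 * p + k + Suc k" using k2 by simp_all
    have B: "qpinf (X (2 * p + Suc k)) q \<noteq> 0" using nz(1)[of "p + n"] unfolding tp e1 .
    have C: "qpinf (X (2 * p + k + Suc k)) q \<noteq> 0" using nz(2)[of "p + n"] unfolding wp e1 .
    have A: "qpoch (X (2 * p)) q (Suc k) = Y p * (1 - X (2 * p + k))"
      unfolding Y_def Xs[symmetric] by (rule qpoch_Suc)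
    have D: "qpoch (X (2 * p + k)) q (Suc k) = (1 - X (2 * p + k)) * Y (p + n)"
    proof -
      have "qpoch (X (2 * p + k)) q (1 + k) = qpoch (X (2 * p + k)) q 1 * qpoch (X (2 * p + k) * q ^ 1) q k"
        by (rule qpoch_add)
      also have "X (2 * p + k) * q ^ 1 = X (2 * (p + n))" unfolding Xs using k2 by simp
      also have "qpoch (X (2 * p + k)) q 1 = 1 - X (2 * p + k)" by (simp add: qpoch_def)
      finally show ?thesis unfolding Y_def by simp
    qed
    show ?thesis unfolding tp wp e1 sp1[of "2 * p"] sp1[of "2 * p + k"] A D
      by (rule alg_fp[OF B C Xnz[of "2 * p + k"]])
  qed
  have "(\<Prod>p. qpinf (z1 * z2 * t ^ p) q * qpinf (w * z1 * z2 * t ^ (p + n)) q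
             / (qpinf (z1 * z2 * t ^ (p + n)) q * qpinf (w * z1 * z2 * t ^ p) q)) = (\<Prod>r<n. Y r)"
    by (rule telescope[OF Ynz Y1 cv fp])
  also have "\<dots> = pT (\<lambda>i j. 1 - z ^ 2 * q ^ (i + j - 2)) (2 * n)"
  proof -
    obtain kk where kk: "n = kk + 1" using n by (intro that[of "n - 1"]) simp
    let ?G = "\<lambda>e. 1 - z ^ 2 * q ^ (e - 2)"
    have "pT (\<lambda>i j. ?G (i + j)) (2 * kk + 2) = (\<Prod>r<kk+1. \<Prod>i<2*kk+1. ?G (2*r+i+3))" by (rule vand_even)
    moreover have "(\<Prod>r<kk+1. \<Prod>i<2*kk+1. ?G (2*r+i+3)) = (\<Prod>r<n. Y r)"
      unfolding kk Y_def
    proof (rule prod.cong[OF refl])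
      fix r
      have "k = 2 * kk + 1" using k1 kk by simp
      then show "(\<Prod>i<2*kk+1. ?G (2*r+i+3)) = qpoch (X (2 * r)) q k"
        unfolding qpoch_def X_def Z_def z1 z2
        by (simp add: power_add power2_eq_square mult_ac)
    qed
    moreover have "2 * kk + 2 = 2 * n" using kk by simp
    ultimately show ?thesis by simp
  qed
  finally show ?thesis .
qed

lemma alg_fpo: "(B::real) \<noteq> 0 \<Longrightarrow> C \<noteq> 0 \<Longrightarrow> c \<noteq> 0 \<Longrightarrow>
  P * B * C / (Q * C * B) = P * c / (c * Q)"
proof -
  assume a: "B \<noteq> 0" "C \<noteq> 0" "c \<noteq> 0"
  have "P * B * C / (Q * C * B) = (P * (B * C)) / (Q * (B * C))" by (simp only: mult_ac)
  also have "\<dots> = P / Q" using a by (intro nonzero_mult_divide_mult_cancel_right) simp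
  also have "\<dots> = (P * c) / (Q * c)" using a by simp
  finally show ?thesis by (simp only: mult_ac)
qed

lemma prodinf_odd:
  fixes q t u z z1 z2 :: real
  assumes q: "0 < q" "q < 1" and t: "t = q^2" and nm: "n = Suc m" and u: "u = q * t ^ (n - 1)"
    and z1: "z1 = z" and z2: "z2 = q * z"
    and nz: "\<And>p. qpinf (z1 * z2 * t ^ p) q \<noteq> 0" "\<And>p. qpinf (u * z1 * z2 * t ^ p) q \<noteq> 0"
    and cv: "convergent_prod (\<lambda>p. qpinf (z1 * z2 * t ^ p) q * qpinf (u * z1 * z2 * t ^ (p + n - 1)) q
             / (qpinf (u * z1 * z2 * t ^ p) q * qpinf (z1 * z2 * t ^ (p + n - 1)) q))"
  shows "(\<Prod>p. qpinf (z1 * z2 * t ^ p) q * qpinf (u * z1 * z2 * t ^ (p + n - 1)) q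
             / (qpinf (u * z1 * z2 * t ^ p) q * qpinf (z1 * z2 * t ^ (p + n - 1)) q))
       = pT (\<lambda>i j. 1 - z ^ 2 * q ^ (i + j - 2)) (2 * n - 1)"
proof -
  have aq: "\<bar>q\<bar> < 1" using q by simp
  define Z where "Z = z1 * z2"
  define X where "X e = Z * q ^ e" for e
  define k where "k = 2 * m"
  have tp: "z1 * z2 * t ^ p = X (2 * p)" for p unfolding X_def Z_def t by (simp add: power_mult)
  have up: "u * z1 * z2 * t ^ p = X (2 * p + Suc k)" for p
    unfolding X_def Z_def u t k_def nm by (simp add: power_mult[symmetric] power_add mult_ac)
  have Xs: "X e * q ^ a = X (e + a)" for e a unfolding X_def by (simp add: power_add mult.assoc)
  have Xnz: "1 - X e \<noteq> 0" for e
    using qpinf_factor_nz[OF aq nz(1)[of 0], of e] unfolding X_def Z_def by simp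
  define Y where "Y p = qpoch (X (2 * p)) q (Suc k)" for p
  have Ynz: "Y p \<noteq> 0" for p
    unfolding Y_def qpoch_def using Xnz Xs by (simp add: prod_zero_iff)
  have Y1: "Y \<longlonglongrightarrow> 1"
  proof -
    have "(\<lambda>p. qpoch (Z * q ^ (2 * p)) q (Suc k)) \<longlonglongrightarrow> 1" by (rule Y_lim[OF q])
    then show ?thesis unfolding Y_def X_def .
  qed
  have sp: "qpinf (X e) q = qpoch (X e) q k * qpinf (X (e + k)) q" for e
    using qpinf_split[OF aq, of "X e" k] unfolding Xs .
  have pn: "p + n - 1 = p + m" for p using nm by simp
  have fp: "qpinf (z1 * z2 * t ^ p) q * qpinf (u * z1 * z2 * t ^ (p + n - 1)) q
             / (qpinf (u * z1 * z2 * t ^ p) q * qpinf (z1 * z2 * t ^ (p + n - 1)) q) = Y p / Y (p + m)" for p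
  proof -
    have e1: "2 * (p + m) = 2 * p + k" "2 * p + k + Suc k = 2 * p + Suc k + k" unfolding k_def by simp_all
    have B: "qpinf (X (2 * p + k)) q \<noteq> 0" using nz(1)[of "p + m"] unfolding tp e1 .
    have C: "qpinf (X (2 * p + Suc k + k)) q \<noteq> 0" using nz(2)[of "p + m"] unfolding up e1 .
    have YA: "Y p = qpoch (X (2 * p)) q k * (1 - X (2 * p + k))"
      unfolding Y_def Xs[symmetric] by (rule qpoch_Suc)
    have YD: "Y (p + m) = (1 - X (2 * p + k)) * qpoch (X (2 * p + Suc k)) q k"
    proof -
      have "qpoch (X (2 * p + k)) q (1 + k) = qpoch (X (2 * p + k)) q 1 * qpoch (X (2 * p + k) * q ^ 1) q k"
        by (rule qpoch_add)
      also have "X (2 * p + k) * q ^ 1 = X (2 * p + Suc k)" unfolding Xs by simp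
      also have "qpoch (X (2 * p + k)) q 1 = 1 - X (2 * p + k)" by (simp add: qpoch_def)
      finally show ?thesis unfolding Y_def e1 by simp
    qed
    show ?thesis unfolding pn tp up e1 sp[of "2 * p"] sp[of "2 * p + Suc k"] YA YD
      by (rule alg_fpo[OF B C Xnz[of "2 * p + k"]])
  qed
  have "(\<Prod>p. qpinf (z1 * z2 * t ^ p) q * qpinf (u * z1 * z2 * t ^ (p + n - 1)) q
             / (qpinf (u * z1 * z2 * t ^ p) q * qpinf (z1 * z2 * t ^ (p + n - 1)) q)) = (\<Prod>r<m. Y r)"
    by (rule telescope[OF Ynz Y1 cv fp])
  also have "\<dots> = pT (\<lambda>i j. 1 - z ^ 2 * q ^ (i + j - 2)) (2 * n - 1)"
  proof -
    let ?G = "\<lambda>e. 1 - z ^ 2 * q ^ (e - 2)"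
    have "pT (\<lambda>i j. ?G (i + j)) (2 * m + 1) = (\<Prod>r<m. \<Prod>i<2*m+1. ?G (2*r+i+3))" by (rule vand_odd)
    moreover have "(\<Prod>r<m. \<Prod>i<2*m+1. ?G (2*r+i+3)) = (\<Prod>r<m. Y r)"
      unfolding Y_def
    proof (rule prod.cong[OF refl])
      fix r
      have "Suc k = 2 * m + 1" unfolding k_def by simp
      then show "(\<Prod>i<2*m+1. ?G (2*r+i+3)) = qpoch (X (2 * r)) q (Suc k)"
        unfolding qpoch_def X_def Z_def z1 z2
        by (simp add: power_add power2_eq_square mult_ac)
    qed
    moreover have "2 * m + 1 = 2 * n - 1" using nm by simp
    ultimately show ?thesis by simp
  qed
  finally show ?thesis .
qed




lemma prod_powi: "finite A \<Longrightarrow> (q::real) \<noteq> 0 \<Longrightarrow> (\<Prod>j\<in>A. q powi f j) = q powi (\<Sum>j\<in>A. f j)"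
  by (induction A rule: finite_induct) (simp_all add: power_int_add)

lemma psize_eq: assumes "\<And>i. i > n \<Longrightarrow> mu i = 0" shows "psize mu = (\<Sum>i=1..n. mu i)"
proof -
  have "(\<Sum>i=1..n. mu i) = (\<Sum>i\<in>{i. 1 \<le> i \<and> mu i \<noteq> 0}. mu i)"
  proof (rule sum.mono_neutral_right)
    show "{i. 1 \<le> i \<and> mu i \<noteq> 0} \<subseteq> {1..n}"
    proof
      fix i assume "i \<in> {i. 1 \<le> i \<and> mu i \<noteq> 0}"
      then show "i \<in> {1..n}" using assms[of i] by (cases "i \<le> n") auto
    qed
  qed auto
  then show ?thesis unfolding psize_def by simp
qed

lemma qpinf_ratio:
  fixes q x :: real assumes q: "0 < q" "q < 1" and nz: "qpinf (x * q ^ N) q \<noteq> 0"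
  shows "qpinf x q / qpinf (x * q ^ N) q = qpoch x q N"
  using qpinf_split[of q x N] q nz by simp

lemma qpoch_prod1: "(\<Prod>i=1..N. 1 - a * z * q ^ (i - 1)) = qpoch (z * a) q N"
proof -
  have "(\<Prod>i=1..N. 1 - a * z * q ^ (i - 1)) = (\<Prod>k<N. 1 - a * z * q ^ (Suc k - 1))"
    by (simp only: One_nat_def prod.atLeast1_atMost_eq)
  then show ?thesis unfolding qpoch_def by (simp add: mult_ac)
qed

lemma alg_fin:
  fixes Qp PI V C zA zH zm zk aN aH aP qB qH S1 S2 qk :: real
  assumes "zA * zH = zm * zk" "aN * aH = aP" "qB * qH = S1 * S2 * qk"
  shows "Qp * PI * (S1 * S2 * V / C) * zm * (qk * zk) * aP = zA * aN * qB / C * Qp * PI * zH * aH * (qH * V)"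
proof -
  have "zA * aN * qB / C * Qp * PI * zH * aH * (qH * V) = (Qp * PI * V / C) * ((zA * zH) * (aN * aH) * (qB * qH))"
    by (simp add: divide_inverse mult_ac)
  also have "\<dots> = (Qp * PI * V / C) * ((zm * zk) * aP * (S1 * S2 * qk))" by (simp only: assms)
  also have "\<dots> = Qp * PI * (S1 * S2 * V / C) * zm * (qk * zk) * aP" by (simp add: divide_inverse mult_ac)
  finally show ?thesis by (rule sym)
qed

lemma main_even:
  fixes q z \<alpha> :: real and n :: nat and mu ka :: "nat \<Rightarrow> nat" and h :: "nat \<Rightarrow> int"
  assumes q: "0 < q" "q < 1" and n: "n \<ge> 1" and zp: "z > 0" and ap: "\<alpha> > 0"
    and nzA: "qpinf ((q^2)^n * z * \<alpha>) q \<noteq> 0"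
    and nzZ: "\<forall>p. qpinf (z * (q * z) * (q^2)^p) q \<noteq> 0 \<and> qpinf (inverse q * (q^2)^n * z * (q * z) * (q^2)^p) q \<noteq> 0"
    and cv: "convergent_prod (\<lambda>p. qpinf (z * (q * z) * (q^2)^p) q * qpinf (inverse q * (q^2)^n * z * (q * z) * (q^2)^(p + n)) q
             / (qpinf (z * (q * z) * (q^2)^(p + n)) q * qpinf (inverse q * (q^2)^n * z * (q * z) * (q^2)^p) q))"
    and H1: "\<forall>i>n. mu i = 0 \<and> ka i = 0"
    and H2: "\<forall>j\<in>{1..n}. ka j \<le> mu j \<and> (j < n \<longrightarrow> mu (Suc j) \<le> ka j)"
    and H3: "\<forall>j\<in>{1..n}. h (2 * j - 1) = int (mu j) + 2 * int n - (2 * int j - 1)"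
    and H4: "\<forall>j\<in>{1..n}. h (2 * j) = int (ka j) + 2 * int n - 2 * int j"
  shows "Pr_e q (q^2) 2 n z (q * z) (inverse q * (q^2)^n) \<alpha> mu ka = PN q z \<alpha> (2 * n) h"
proof -
  interpret ilace n mu ka
  proof
    fix j assume j: "1 \<le> j" "j \<le> n"
    show "ka j \<le> mu j \<and> mu (Suc j) \<le> ka j"
    proof (cases "j < n")
      case True then show ?thesis using H2 j by auto
    next
      case False then have "mu (Suc j) = 0" using H1 j by auto
      then show ?thesis using H2 j by auto
    qed
  next
    fix i assume "n < i" then show "mu i = 0 \<and> ka i = 0" using H1 by auto
  qed
  have qnz: "q \<noteq> 0" and znz: "z \<noteq> 0" and anz: "\<alpha> \<noteq> 0" using q zp ap by auto
  define N where "N = 2 * n"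
  define SM where "SM = (\<Sum>i=1..n. mu i)"
  define SK where "SK = (\<Sum>i=1..n. ka i)"
  define S1 where "S1 = (q^2)^(\<Sum>i=1..n. (i-1) * mu i)"
  define S2 where "S2 = (q^2)^(\<Sum>i=1..n. (i-1) * ka i)"
  define V where "V = pT (\<lambda>i j. E q (al mu i - al mu j)) n * pT (\<lambda>i j. E q (be ka i - be ka j)) n
         * pU (\<lambda>i j. E q (al mu i - be ka j)) n * pT (\<lambda>i j. E q (be ka i - al mu j)) n"
  define C where "C = (\<Prod>i=1..n. qpoch q q (2*n + 1 - 2*i)) * (\<Prod>i=1..n. qpoch q q (2*n - 2*i))"
  define PI where "PI = pT (\<lambda>i j. 1 - z ^ 2 * q ^ (i + j - 2)) (2 * n)"
  have psm: "psize mu = SM" unfolding SM_def by (rule psize_eq) (use H1 in auto)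
  have psk: "psize ka = SK" unfolding SK_def by (rule psize_eq) (use H1 in auto)
  have PIe: "(\<Prod>p. qpinf (z * (q * z) * (q^2) ^ p) q * qpinf (inverse q * (q^2)^n * z * (q * z) * (q^2) ^ (p + n)) q
             / (qpinf (z * (q * z) * (q^2) ^ (p + n)) q * qpinf (inverse q * (q^2)^n * z * (q * z) * (q^2) ^ p) q)) = PI"
    unfolding PI_def
    by (rule prodinf_even[OF q refl n refl refl refl]) (use nzZ cv in auto)
  have Qp: "qpinf (z * \<alpha>) q / qpinf ((q^2)^n * z * \<alpha>) q = qpoch (z * \<alpha>) q (2 * n)"
  proof -
    have e0: "(q^2)^n = q^(2*n)" by (rule power_mult[symmetric])
    have e: "(q^2)^n * z * \<alpha> = z * \<alpha> * q ^ (2 * n)" unfolding e0 by (simp only: mult_ac)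
    show ?thesis unfolding e by (rule qpinf_ratio[OF q]) (use nzA e in simp)
  qed
  have core: "EQ q (q^2) 2 n ((q^2)^n) mu * EP q (q^2) 2 n (inverse q * (q^2)^n) ka * psi q (q^2) mu ka
     = S1 * S2 * V / C"
    unfolding core_even[OF q] S1_def S2_def V_def C_def by (simp only: mult.assoc)
  have LHS: "Pr_e q (q^2) 2 n z (q * z) (inverse q * (q^2)^n) \<alpha> mu ka
     = qpoch (z * \<alpha>) q (2 * n) * PI * (S1 * S2 * V / C) * z ^ SM * (q ^ SK * z ^ SK) * \<alpha> powi (int SM - int SK)"
  proof -
    have "Pr_e q (q^2) 2 n z (q * z) (inverse q * (q^2)^n) \<alpha> mu ka
     = qpinf (z * \<alpha>) q / qpinf ((q^2)^n * z * \<alpha>) q * PI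
       * (EQ q (q^2) 2 n ((q^2)^n) mu * EP q (q^2) 2 n (inverse q * (q^2)^n) ka * psi q (q^2) mu ka)
       * z ^ psize mu * (q * z) ^ psize ka * \<alpha> powi (int (psize mu) - int (psize ka))"
      unfolding Pr_e_def PIe by (simp only: mult.assoc)
    then show ?thesis unfolding Qp core psm psk power_mult_distrib .
  qed
  have hh: "h (2*i-1) = int (mu i) + 2 * int n - (2 * int i - 1)" "h (2*i) = int (ka i) + 2 * int n - 2 * int i"
    if "i \<in> {1..n}" for i using H3 H4 that by auto
  have vdm: "pT (\<lambda>i j. q powi h j - q powi h i) (2 * n) = (\<Prod>j\<in>{1..2*n}. (q powi h j) ^ (j - 1)) * V"
    unfolding V_def
  proof (rule vdm_even[OF q(1)])
    fix j assume "j \<in> {1..n}"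
    then show "h (2 * j - 1) = al mu j + 2 * int n + 1" "h (2 * j) = be ka j + 2 * int n + 1"
      using hh[of j] by (simp_all add: al_def be_def)
  qed
  have RHS: "PN q z \<alpha> (2 * n) h = z powi (- (\<Sum>j=1..2*n. int (2*n - j))) * \<alpha> powi (- int (2*n div 2))
      * q powi (- (\<Sum>j=1..2*n. int ((j - 1) * (2*n - j)))) / C * qpoch (z * \<alpha>) q (2 * n) * PI
      * z powi (\<Sum>j=1..2*n. h j) * \<alpha> powi (\<Sum>j=1..2*n. (-1) ^ (j - 1) * h j)
      * ((\<Prod>j\<in>{1..2*n}. (q powi h j) ^ (j - 1)) * V)"
    unfolding PN_def cN_def pT_def[symmetric] vdm[symmetric] qpoch_prod1 PI_def[symmetric]
      consts_even[OF q] C_def[symmetric] ..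
  have d: "h (2*i-1) - int (2*n - (2*i-1)) = int (mu i)" "h (2*i) - int (2*n - 2*i) = int (ka i)"
    if "i \<in> {1..n}" for i
  proof -
    have "int (2*n - (2*i-1)) = 2 * int n - (2 * int i - 1)" "int (2*n - 2*i) = 2 * int n - 2 * int i"
      using that by auto
    then show "h (2*i-1) - int (2*n - (2*i-1)) = int (mu i)" "h (2*i) - int (2*n - 2*i) = int (ka i)"
      using hh[OF that] by simp_all
  qed
  have sz: "(\<Sum>j=1..2*n. h j) - (\<Sum>j=1..2*n. int (2*n - j)) = int SM + int SK"
  proof -
    have "(\<Sum>j=1..2*n. h j) - (\<Sum>j=1..2*n. int (2*n - j)) = (\<Sum>j=1..2*n. h j - int (2*n - j))"
      by (simp add: sum_subtractf)
    also have "\<dots> = (\<Sum>i=1..n. (h (2*i-1) - int (2*n - (2*i-1))) + (h (2*i) - int (2*n - 2*i)))"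
      by (rule sum_split2)
    also have "\<dots> = (\<Sum>i=1..n. int (mu i) + int (ka i))"
    proof (rule sum.cong[OF refl])
      fix i assume i: "i \<in> {1..n}"
      show "(h (2*i-1) - int (2*n - (2*i-1))) + (h (2*i) - int (2*n - 2*i)) = int (mu i) + int (ka i)"
        unfolding d[OF i] ..
    qed
    finally show ?thesis unfolding SM_def SK_def by (simp add: sum.distrib)
  qed
  have Zid: "z powi (- (\<Sum>j=1..2*n. int (2*n - j))) * z powi (\<Sum>j=1..2*n. h j) = z ^ SM * z ^ SK"
  proof -
    have "z powi (- (\<Sum>j=1..2*n. int (2*n - j))) * z powi (\<Sum>j=1..2*n. h j)
        = z powi (- (\<Sum>j=1..2*n. int (2*n - j)) + (\<Sum>j=1..2*n. h j))"
      by (rule power_int_add[symmetric]) (use znz in simp)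
    also have "- (\<Sum>j=1..2*n. int (2*n - j)) + (\<Sum>j=1..2*n. h j) = int (SM + SK)" using sz by simp
    also have "z powi int (SM + SK) = z ^ SM * z ^ SK" by (simp only: power_int_of_nat power_add)
    finally show ?thesis .
  qed
  have sa: "(\<Sum>j=1..2*n. (-1) ^ (j - 1) * h j) = int SM - int SK + int n"
  proof -
    have "(\<Sum>j=1..2*n. (-1) ^ (j - 1) * h j) = (\<Sum>i=1..n. (-1) ^ (2*i-1-1) * h (2*i-1) + (-1) ^ (2*i-1) * h (2*i))"
      by (rule sum_split2)
    also have "\<dots> = (\<Sum>i=1..n. (int (mu i) - int (ka i) + 1))"
    proof (rule sum.cong[OF refl])
      fix i assume i: "i \<in> {1..n}"
      have e1: "2*i-1-1 = 2*(i-1)" "2*i-1 = Suc (2*(i-1))" using i by auto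
      have "(-1::int) ^ (2*i-1-1) = 1" "(-1::int) ^ (2*i-1) = -1" unfolding e1 by simp_all
      then show "(-1) ^ (2*i-1-1) * h (2*i-1) + (-1) ^ (2*i-1) * h (2*i) = int (mu i) - int (ka i) + 1"
        using hh[OF i] by simp
    qed
    also have "\<dots> = int SM - int SK + int n" unfolding SM_def SK_def by (simp add: sum.distrib sum_subtractf)
    finally show ?thesis .
  qed
  have Aid: "\<alpha> powi (- int (2*n div 2)) * \<alpha> powi (\<Sum>j=1..2*n. (-1) ^ (j - 1) * h j) = \<alpha> powi (int SM - int SK)"
  proof -
    have "\<alpha> powi (- int (2*n div 2)) * \<alpha> powi (\<Sum>j=1..2*n. (-1) ^ (j - 1) * h j)
       = \<alpha> powi (- int (2*n div 2) + (\<Sum>j=1..2*n. (-1) ^ (j - 1) * h j))"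
      by (rule power_int_add[symmetric]) (use anz in simp)
    also have "- int (2*n div 2) + (\<Sum>j=1..2*n. (-1) ^ (j - 1) * h j) = int SM - int SK" using sa by simp
    finally show ?thesis .
  qed
  have sq: "(\<Sum>j=1..2*n. h j * int (j - 1)) - (\<Sum>j=1..2*n. int ((j - 1) * (2*n - j)))
      = int (2 * (\<Sum>i=1..n. (i-1) * mu i) + 2 * (\<Sum>i=1..n. (i-1) * ka i) + SK)"
  proof -
    have "(\<Sum>j=1..2*n. h j * int (j - 1)) - (\<Sum>j=1..2*n. int ((j - 1) * (2*n - j)))
       = (\<Sum>j=1..2*n. int (j - 1) * (h j - int (2*n - j)))"
      by (simp add: sum_subtractf right_diff_distrib mult_ac)
    also have "\<dots> = (\<Sum>i=1..n. int (2*i-1-1) * (h (2*i-1) - int (2*n - (2*i-1))) + int (2*i-1) * (h (2*i) - int (2*n - 2*i)))"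
      by (rule sum_split2)
    also have "\<dots> = (\<Sum>i=1..n. 2 * int ((i-1) * mu i) + 2 * int ((i-1) * ka i) + int (ka i))"
    proof (rule sum.cong[OF refl])
      fix i assume i: "i \<in> {1..n}"
      have e1: "int (2*i-1-1) = 2 * int (i - 1)" "int (2*i-1) = 2 * int (i - 1) + 1" using i by auto
      show "int (2*i-1-1) * (h (2*i-1) - int (2*n - (2*i-1))) + int (2*i-1) * (h (2*i) - int (2*n - 2*i))
          = 2 * int ((i-1) * mu i) + 2 * int ((i-1) * ka i) + int (ka i)"
        unfolding d[OF i] e1 of_nat_mult by (simp only: algebra_simps)
    qed
    also have "\<dots> = int (2 * (\<Sum>i=1..n. (i-1) * mu i) + 2 * (\<Sum>i=1..n. (i-1) * ka i) + SK)"
      unfolding SK_def by (simp add: sum.distrib sum_distrib_left)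
    finally show ?thesis .
  qed
  have Qid: "q powi (- (\<Sum>j=1..2*n. int ((j - 1) * (2*n - j)))) * (\<Prod>j\<in>{1..2*n}. (q powi h j) ^ (j - 1)) = S1 * S2 * q ^ SK"
  proof -
    have "(\<Prod>j\<in>{1..2*n}. (q powi h j) ^ (j - 1)) = (\<Prod>j\<in>{1..2*n}. q powi (h j * int (j - 1)))"
      by (simp add: power_int_power')
    also have "\<dots> = q powi (\<Sum>j=1..2*n. h j * int (j - 1))" by (rule prod_powi) (use qnz in auto)
    finally have p1: "(\<Prod>j\<in>{1..2*n}. (q powi h j) ^ (j - 1)) = q powi (\<Sum>j=1..2*n. h j * int (j - 1))" .
    have "q powi (- (\<Sum>j=1..2*n. int ((j - 1) * (2*n - j)))) * q powi (\<Sum>j=1..2*n. h j * int (j - 1))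
       = q powi (- (\<Sum>j=1..2*n. int ((j - 1) * (2*n - j))) + (\<Sum>j=1..2*n. h j * int (j - 1)))"
      by (rule power_int_add[symmetric]) (use qnz in simp)
    also have "- (\<Sum>j=1..2*n. int ((j - 1) * (2*n - j))) + (\<Sum>j=1..2*n. h j * int (j - 1))
      = int (2 * (\<Sum>i=1..n. (i-1) * mu i) + 2 * (\<Sum>i=1..n. (i-1) * ka i) + SK)" using sq by simp
    also have "q powi int (2 * (\<Sum>i=1..n. (i-1) * mu i) + 2 * (\<Sum>i=1..n. (i-1) * ka i) + SK) = S1 * S2 * q ^ SK"
      unfolding S1_def S2_def power_int_of_nat by (simp add: power_add power_mult)
    finally show ?thesis unfolding p1 .
  qed
  show ?thesis unfolding LHS RHS
    by (rule alg_fin[OF Zid Aid Qid])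
qed




lemma main_odd:
  fixes q z \<alpha> :: real and n m :: nat and mu ka :: "nat \<Rightarrow> nat" and h :: "nat \<Rightarrow> int"
  assumes q: "0 < q" "q < 1" and nm: "n = Suc m" and zp: "z > 0" and ap: "\<alpha> > 0"
    and nzA: "qpinf (q * (q^2)^(n-1) * z * \<alpha>) q \<noteq> 0"
    and nzZ: "\<forall>p. qpinf (z * (q * z) * (q^2)^p) q \<noteq> 0 \<and> qpinf (q * (q^2)^(n-1) * z * (q * z) * (q^2)^p) q \<noteq> 0"
    and cv: "convergent_prod (\<lambda>p. qpinf (z * (q * z) * (q^2)^p) q * qpinf (q * (q^2)^(n-1) * z * (q * z) * (q^2)^(p + n - 1)) q
             / (qpinf (q * (q^2)^(n-1) * z * (q * z) * (q^2)^p) q * qpinf (z * (q * z) * (q^2)^(p + n - 1)) q))"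
    and H1: "\<forall>i>n. mu i = 0" and H1': "\<forall>i\<ge>n. ka i = 0"
    and H2: "\<forall>j\<in>{1..n-1}. ka j \<le> mu j \<and> mu (Suc j) \<le> ka j"
    and H3: "\<forall>j\<in>{1..n}. h (2 * j - 1) = int (mu j) + (2 * int n - 1) - (2 * int j - 1)"
    and H4: "\<forall>j\<in>{1..n-1}. h (2 * j) = int (ka j) + (2 * int n - 1) - 2 * int j"
  shows "Pr_o q (q^2) 2 n z (q * z) (q * (q^2)^(n-1)) \<alpha> mu ka = PN q z \<alpha> (2 * n - 1) h"
proof -
  have kn: "ka n = 0" using H1' by simp
  interpret ilace n mu ka
  proof
    fix j assume j: "1 \<le> j" "j \<le> n"
    show "ka j \<le> mu j \<and> mu (Suc j) \<le> ka j"
    proof (cases "j < n")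
      case True then show ?thesis using H2 j by auto
    next
      case False then have "j = n" "mu (Suc j) = 0" using H1 j by auto
      then show ?thesis using kn by auto
    qed
  next
    fix i assume "n < i" then show "mu i = 0 \<and> ka i = 0" using H1 H1' by auto
  qed
  have qnz: "q \<noteq> 0" and znz: "z \<noteq> 0" and anz: "\<alpha> \<noteq> 0" using q zp ap by auto
  have N: "2 * n - 1 = Suc (2 * m)" using nm by simp
  define SM where "SM = (\<Sum>i=1..n. mu i)"
  define SK where "SK = (\<Sum>i=1..n. ka i)"
  define S1 where "S1 = (q^2)^(\<Sum>i=1..n. (i-1) * mu i)"
  define S2 where "S2 = (q^2)^(\<Sum>i=1..n. (i-1) * ka i)"
  define V where "V = pT (\<lambda>i j. E q (al mu i - al mu j)) n * pT (\<lambda>i j. E q (be ka i - be ka j)) m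
         * pU (\<lambda>i j. E q (al mu i - be ka j)) m * pT (\<lambda>i j. E q (be ka i - al mu j)) n"
  define C where "C = (\<Prod>i=1..n. qpoch q q (2*n - 2*i)) * (\<Prod>i=1..m. qpoch q q (2*n - 2*i - 1))"
  define PI where "PI = pT (\<lambda>i j. 1 - z ^ 2 * q ^ (i + j - 2)) (2 * n - 1)"
  have psm: "psize mu = SM" unfolding SM_def by (rule psize_eq) (use H1 in auto)
  have psk: "psize ka = SK" unfolding SK_def by (rule psize_eq) (use H1' in auto)
  have PIe: "(\<Prod>p. qpinf (z * (q * z) * (q^2)^p) q * qpinf (q * (q^2)^(n-1) * z * (q * z) * (q^2)^(p + n - 1)) q
             / (qpinf (q * (q^2)^(n-1) * z * (q * z) * (q^2)^p) q * qpinf (z * (q * z) * (q^2)^(p + n - 1)) q)) = PI"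
    unfolding PI_def
    by (rule prodinf_odd[OF q refl nm refl refl refl]) (use nzZ cv in auto)
  have Qp: "qpinf (z * \<alpha>) q / qpinf (q * (q^2)^(n-1) * z * \<alpha>) q = qpoch (z * \<alpha>) q (2 * n - 1)"
  proof -
    have e0: "q * (q^2)^(n-1) = q^(2*n-1)"
    proof -
      have "(q^2)^(n-1) = q^(2*(n-1))" by (rule power_mult[symmetric])
      moreover have "2 * n - 1 = Suc (2 * (n - 1))" using nm by simp
      ultimately show ?thesis by simp
    qed
    have e: "q * (q^2)^(n-1) * z * \<alpha> = z * \<alpha> * q ^ (2 * n - 1)" unfolding e0 by (simp only: mult_ac)
    have nz': "qpinf (z * \<alpha> * q ^ (2 * n - 1)) q \<noteq> 0" using nzA unfolding e .
    show ?thesis unfolding e by (rule qpinf_ratio[OF q nz'])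
  qed
  have core: "EQ q (q^2) 2 n (q * (q^2)^(n-1)) mu * EP q (q^2) 2 n ((q^2)^(n-1)) ka * psi q (q^2) mu ka
     = S1 * S2 * V / C"
    unfolding core_odd[OF q nm kn] S1_def S2_def V_def C_def by (simp only: mult.assoc)
  have LHS: "Pr_o q (q^2) 2 n z (q * z) (q * (q^2)^(n-1)) \<alpha> mu ka
     = qpoch (z * \<alpha>) q (2 * n - 1) * PI * (S1 * S2 * V / C) * z ^ SM * (q ^ SK * z ^ SK) * \<alpha> powi (int SM - int SK)"
  proof -
    have "Pr_o q (q^2) 2 n z (q * z) (q * (q^2)^(n-1)) \<alpha> mu ka
     = qpinf (z * \<alpha>) q / qpinf (q * (q^2)^(n-1) * z * \<alpha>) q * PI
       * (EQ q (q^2) 2 n (q * (q^2)^(n-1)) mu * EP q (q^2) 2 n ((q^2)^(n-1)) ka * psi q (q^2) mu ka)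
       * z ^ psize mu * (q * z) ^ psize ka * \<alpha> powi (int (psize mu) - int (psize ka))"
      unfolding Pr_o_def PIe by (simp only: mult.assoc)
    then show ?thesis unfolding Qp core psm psk power_mult_distrib .
  qed
  have hh: "h (2*i-1) = int (mu i) + (2 * int n - 1) - (2 * int i - 1)" if "i \<in> {1..n}" for i
    using H3 that by auto
  have hh2: "h (2*i) = int (ka i) + (2 * int n - 1) - 2 * int i" if "i \<in> {1..m}" for i
    using H4 that nm by auto
  have vdm: "pT (\<lambda>i j. q powi h j - q powi h i) (2 * n - 1) = (\<Prod>j\<in>{1..2*n-1}. (q powi h j) ^ (j - 1)) * V"
  proof -
    have "pT (\<lambda>i j. q powi h j - q powi h i) (Suc (2 * m)) = (\<Prod>j\<in>{1..Suc (2*m)}. (q powi h j) ^ (j - 1))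
      * (pT (\<lambda>i j. E q (al mu i - al mu j)) (Suc m) * pT (\<lambda>i j. E q (be ka i - be ka j)) m
         * pU (\<lambda>i j. E q (al mu i - be ka j)) m * pT (\<lambda>i j. E q (be ka i - al mu j)) (Suc m))"
    proof (rule vdm_odd[OF q(1)])
      fix j assume "j \<in> {1..Suc m}"
      then show "h (2 * j - 1) = al mu j + 2 * int (Suc m)" using hh[of j] nm by (simp add: al_def)
    next
      fix j assume "j \<in> {1..m}"
      then show "h (2 * j) = be ka j + 2 * int (Suc m)" using hh2[of j] nm by (simp add: be_def)
    qed
    then show ?thesis unfolding N V_def nm[symmetric] .
  qed
  have RHS: "PN q z \<alpha> (2 * n - 1) h = z powi (- (\<Sum>j=1..2*n-1. int (2*n-1 - j))) * \<alpha> powi (- int ((2*n-1) div 2))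
      * q powi (- (\<Sum>j=1..2*n-1. int ((j - 1) * (2*n-1 - j)))) / C * qpoch (z * \<alpha>) q (2 * n - 1) * PI
      * z powi (\<Sum>j=1..2*n-1. h j) * \<alpha> powi (\<Sum>j=1..2*n-1. (-1) ^ (j - 1) * h j)
      * ((\<Prod>j\<in>{1..2*n-1}. (q powi h j) ^ (j - 1)) * V)"
  proof -
    have cc: "(\<Prod>l=1..2*n-1-1. qpoch q q l) = C"
      unfolding C_def using consts_odd[OF q, of m] unfolding nm[symmetric] .
    show ?thesis
      unfolding PN_def cN_def pT_def[symmetric] vdm[symmetric] qpoch_prod1 PI_def[symmetric] cc ..
  qed
  define NN where "NN = 2 * n - 1"
  have d: "h (2*i-1) - int (NN - (2*i-1)) = int (mu i)" if "i \<in> {1..n}" for i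
  proof -
    have "int (NN - (2*i-1)) = (2 * int n - 1) - (2 * int i - 1)" using that unfolding NN_def by auto
    then show ?thesis using hh[OF that] by simp
  qed
  have d2: "h (2*i) - int (NN - 2*i) = int (ka i)" if "i \<in> {1..m}" for i
  proof -
    have "int (NN - 2*i) = (2 * int n - 1) - 2 * int i" using that nm unfolding NN_def by auto
    then show ?thesis using hh2[OF that] by simp
  qed
  have dn: "h (Suc (2*m)) - int (NN - Suc (2*m)) = int (mu n)"
    using d[of n] nm unfolding NN_def by simp
  have smn: "SM = (\<Sum>i=1..m. mu i) + mu n" "SK = (\<Sum>i=1..m. ka i)"
    unfolding SM_def SK_def nm using kn[unfolded nm] by simp_all
  have sz: "(\<Sum>j=1..NN. h j) - (\<Sum>j=1..NN. int (NN - j)) = int SM + int SK"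
  proof -
    have "(\<Sum>j=1..NN. h j) - (\<Sum>j=1..NN. int (NN - j)) = (\<Sum>j=1..NN. h j - int (NN - j))"
      by (simp add: sum_subtractf)
    also have "\<dots> = (\<Sum>j=1..2*m. h j - int (NN - j)) + (h (Suc (2*m)) - int (NN - Suc (2*m)))"
      unfolding NN_def N by simp
    also have "(\<Sum>j=1..2*m. h j - int (NN - j)) = (\<Sum>i=1..m. (h (2*i-1) - int (NN - (2*i-1))) + (h (2*i) - int (NN - 2*i)))"
      by (rule sum_split2)
    also have "\<dots> = (\<Sum>i=1..m. int (mu i) + int (ka i))"
    proof (rule sum.cong[OF refl])
      fix i assume i: "i \<in> {1..m}"
      then have i': "i \<in> {1..n}" using nm by auto
      show "(h (2*i-1) - int (NN - (2*i-1))) + (h (2*i) - int (NN - 2*i)) = int (mu i) + int (ka i)"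
        unfolding d[OF i'] d2[OF i] ..
    qed
    finally show ?thesis unfolding dn smn by (simp add: sum.distrib)
  qed
  have Zid: "z powi (- (\<Sum>j=1..NN. int (NN - j))) * z powi (\<Sum>j=1..NN. h j) = z ^ SM * z ^ SK"
  proof -
    have "z powi (- (\<Sum>j=1..NN. int (NN - j))) * z powi (\<Sum>j=1..NN. h j)
        = z powi (- (\<Sum>j=1..NN. int (NN - j)) + (\<Sum>j=1..NN. h j))"
      by (rule power_int_add[symmetric]) (use znz in simp)
    also have "- (\<Sum>j=1..NN. int (NN - j)) + (\<Sum>j=1..NN. h j) = int (SM + SK)" using sz by simp
    also have "z powi int (SM + SK) = z ^ SM * z ^ SK" by (simp only: power_int_of_nat power_add)
    finally show ?thesis .
  qed
  have sa: "(\<Sum>j=1..NN. (-1) ^ (j - 1) * h j) = int SM - int SK + int m"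
  proof -
    have "(\<Sum>j=1..NN. (-1) ^ (j - 1) * h j) = (\<Sum>j=1..2*m. (-1) ^ (j - 1) * h j) + (-1) ^ (Suc (2*m) - 1) * h (Suc (2*m))"
      unfolding NN_def N by simp
    also have "(-1) ^ (Suc (2*m) - 1) * h (Suc (2*m)) = int (mu n)" using dn unfolding NN_def N by simp
    also have "(\<Sum>j=1..2*m. (-1) ^ (j - 1) * h j) = (\<Sum>i=1..m. (-1) ^ (2*i-1-1) * h (2*i-1) + (-1) ^ (2*i-1) * h (2*i))"
      by (rule sum_split2)
    also have "\<dots> = (\<Sum>i=1..m. (int (mu i) - int (ka i) + 1))"
    proof (rule sum.cong[OF refl])
      fix i assume i: "i \<in> {1..m}"
      then have i': "i \<in> {1..n}" using nm by auto
      have e1: "2*i-1-1 = 2*(i-1)" "2*i-1 = Suc (2*(i-1))" using i by auto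
      have "(-1::int) ^ (2*i-1-1) = 1" "(-1::int) ^ (2*i-1) = -1" unfolding e1 by simp_all
      then show "(-1) ^ (2*i-1-1) * h (2*i-1) + (-1) ^ (2*i-1) * h (2*i) = int (mu i) - int (ka i) + 1"
        using hh[OF i'] hh2[OF i] by simp
    qed
    finally show ?thesis unfolding smn by (simp add: sum.distrib sum_subtractf)
  qed
  have m2: "NN div 2 = m" unfolding NN_def N by simp
  have Aid: "\<alpha> powi (- int (NN div 2)) * \<alpha> powi (\<Sum>j=1..NN. (-1) ^ (j - 1) * h j) = \<alpha> powi (int SM - int SK)"
  proof -
    have "\<alpha> powi (- int m) * \<alpha> powi (\<Sum>j=1..NN. (-1) ^ (j - 1) * h j)
       = \<alpha> powi (- int m + (\<Sum>j=1..NN. (-1) ^ (j - 1) * h j))"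
      by (rule power_int_add[symmetric]) (use anz in simp)
    also have "- int m + (\<Sum>j=1..NN. (-1) ^ (j - 1) * h j) = int SM - int SK" using sa by simp
    finally show ?thesis unfolding m2 .
  qed
  have sq: "(\<Sum>j=1..NN. h j * int (j - 1)) - (\<Sum>j=1..NN. int ((j - 1) * (NN - j)))
      = int (2 * (\<Sum>i=1..n. (i-1) * mu i) + 2 * (\<Sum>i=1..n. (i-1) * ka i) + SK)"
  proof -
    have "(\<Sum>j=1..NN. h j * int (j - 1)) - (\<Sum>j=1..NN. int ((j - 1) * (NN - j)))
       = (\<Sum>j=1..NN. int (j - 1) * (h j - int (NN - j)))"
      by (simp add: sum_subtractf right_diff_distrib mult_ac)
    also have "\<dots> = (\<Sum>j=1..2*m. int (j - 1) * (h j - int (NN - j))) + int (Suc (2*m) - 1) * (h (Suc (2*m)) - int (NN - Suc (2*m)))"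
      unfolding NN_def N by simp
    also have "int (Suc (2*m) - 1) * (h (Suc (2*m)) - int (NN - Suc (2*m))) = 2 * int (m * mu n)"
      unfolding dn by simp
    also have "(\<Sum>j=1..2*m. int (j - 1) * (h j - int (NN - j))) = (\<Sum>i=1..m. int (2*i-1-1) * (h (2*i-1) - int (NN - (2*i-1))) + int (2*i-1) * (h (2*i) - int (NN - 2*i)))"
      by (rule sum_split2)
    also have "\<dots> = (\<Sum>i=1..m. 2 * int ((i-1) * mu i) + 2 * int ((i-1) * ka i) + int (ka i))"
    proof (rule sum.cong[OF refl])
      fix i assume i: "i \<in> {1..m}"
      then have i': "i \<in> {1..n}" using nm by auto
      have e1: "int (2*i-1-1) = 2 * int (i - 1)" "int (2*i-1) = 2 * int (i - 1) + 1" using i by auto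
      show "int (2*i-1-1) * (h (2*i-1) - int (NN - (2*i-1))) + int (2*i-1) * (h (2*i) - int (NN - 2*i))
          = 2 * int ((i-1) * mu i) + 2 * int ((i-1) * ka i) + int (ka i)"
        unfolding d[OF i'] d2[OF i] e1 of_nat_mult by (simp only: algebra_simps)
    qed
    also have "(\<Sum>i=1..m. 2 * int ((i-1) * mu i) + 2 * int ((i-1) * ka i) + int (ka i)) + 2 * int (m * mu n)
       = int (2 * (\<Sum>i=1..n. (i-1) * mu i) + 2 * (\<Sum>i=1..n. (i-1) * ka i) + SK)"
      unfolding smn nm using kn[unfolded nm] by (simp add: sum.distrib sum_distrib_left)
    finally show ?thesis .
  qed
  have Qid: "q powi (- (\<Sum>j=1..NN. int ((j - 1) * (NN - j)))) * (\<Prod>j\<in>{1..NN}. (q powi h j) ^ (j - 1)) = S1 * S2 * q ^ SK"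
  proof -
    have "(\<Prod>j\<in>{1..NN}. (q powi h j) ^ (j - 1)) = (\<Prod>j\<in>{1..NN}. q powi (h j * int (j - 1)))"
      by (simp add: power_int_power')
    also have "\<dots> = q powi (\<Sum>j=1..NN. h j * int (j - 1))" by (rule prod_powi) (use qnz in auto)
    finally have p1: "(\<Prod>j\<in>{1..NN}. (q powi h j) ^ (j - 1)) = q powi (\<Sum>j=1..NN. h j * int (j - 1))" .
    have "q powi (- (\<Sum>j=1..NN. int ((j - 1) * (NN - j)))) * q powi (\<Sum>j=1..NN. h j * int (j - 1))
       = q powi (- (\<Sum>j=1..NN. int ((j - 1) * (NN - j))) + (\<Sum>j=1..NN. h j * int (j - 1)))"
      by (rule power_int_add[symmetric]) (use qnz in simp)
    also have "- (\<Sum>j=1..NN. int ((j - 1) * (NN - j))) + (\<Sum>j=1..NN. h j * int (j - 1))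
      = int (2 * (\<Sum>i=1..n. (i-1) * mu i) + 2 * (\<Sum>i=1..n. (i-1) * ka i) + SK)" using sq by simp
    also have "q powi int (2 * (\<Sum>i=1..n. (i-1) * mu i) + 2 * (\<Sum>i=1..n. (i-1) * ka i) + SK) = S1 * S2 * q ^ SK"
      unfolding S1_def S2_def power_int_of_nat by (simp add: power_add power_mult)
    finally show ?thesis unfolding p1 .
  qed
  show ?thesis unfolding LHS RHS unfolding NN_def[symmetric]
    by (rule alg_fin[OF Zid Aid Qid])
qed



theorem proposition7:
  fixes q t z \<alpha> w u z1 z2 :: real and n :: nat
  assumes q0: "0 < q" and q1: "q < 1" and t: "t = q ^ 2" and n: "n \<ge> 1"
    and z: "z > 0" and a: "\<alpha> > 0"
    and w: "w = inverse q * t ^ n" and u: "u = q * t ^ (n - 1)"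
    and z1: "z1 = z" and z2: "z2 = q * z"
    and nz1: "qpinf (z1 * \<alpha>) q \<noteq> 0" "qpinf (t ^ n * z1 * \<alpha>) q \<noteq> 0"
             "qpinf (u * z1 * \<alpha>) q \<noteq> 0"
    and nz2: "\<forall>p. qpinf (z1 * z2 * t ^ p) q \<noteq> 0 \<and> qpinf (w * z1 * z2 * t ^ p) q \<noteq> 0
                  \<and> qpinf (u * z1 * z2 * t ^ p) q \<noteq> 0"
    and cv_e: "convergent_prod (\<lambda>p. qpinf (z1 * z2 * t ^ p) q * qpinf (w * z1 * z2 * t ^ (p + n)) q
             / (qpinf (z1 * z2 * t ^ (p + n)) q * qpinf (w * z1 * z2 * t ^ p) q))"
    and cv_o: "convergent_prod (\<lambda>p. qpinf (z1 * z2 * t ^ p) q * qpinf (u * z1 * z2 * t ^ (p + n - 1)) q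
             / (qpinf (u * z1 * z2 * t ^ p) q * qpinf (z1 * z2 * t ^ (p + n - 1)) q))"
  shows
    "(\<forall>(mu :: nat \<Rightarrow> nat) (ka :: nat \<Rightarrow> nat) (h :: nat \<Rightarrow> int).
        (\<forall>i>n. mu i = 0 \<and> ka i = 0)
        \<and> (\<forall>j\<in>{1..n}. ka j \<le> mu j \<and> (j < n \<longrightarrow> mu (Suc j) \<le> ka j))
        \<and> (\<forall>j\<in>{1..n}. h (2 * j - 1) = int (mu j) + 2 * int n - (2 * int j - 1))
        \<and> (\<forall>j\<in>{1..n}. h (2 * j) = int (ka j) + 2 * int n - 2 * int j)
      \<longrightarrow> Pr_e q t 2 n z1 z2 w \<alpha> mu ka = PN q z \<alpha> (2 * n) h)
   \<and> (\<forall>(mu :: nat \<Rightarrow> nat) (ka :: nat \<Rightarrow> nat) (h :: nat \<Rightarrow> int).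
        (\<forall>i>n. mu i = 0) \<and> (\<forall>i\<ge>n. ka i = 0)
        \<and> (\<forall>j\<in>{1..n-1}. ka j \<le> mu j \<and> mu (Suc j) \<le> ka j)
        \<and> (\<forall>j\<in>{1..n}. h (2 * j - 1) = int (mu j) + (2 * int n - 1) - (2 * int j - 1))
        \<and> (\<forall>j\<in>{1..n-1}. h (2 * j) = int (ka j) + (2 * int n - 1) - 2 * int j)
      \<longrightarrow> Pr_o q t 2 n z1 z2 u \<alpha> mu ka = PN q z \<alpha> (2 * n - 1) h)"
  proof (intro conjI allI impI)
  fix mu ka :: "nat \<Rightarrow> nat" and h :: "nat \<Rightarrow> int"
  assume A: "(\<forall>i>n. mu i = 0 \<and> ka i = 0)
        \<and> (\<forall>j\<in>{1..n}. ka j \<le> mu j \<and> (j < n \<longrightarrow> mu (Suc j) \<le> ka j))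
        \<and> (\<forall>j\<in>{1..n}. h (2 * j - 1) = int (mu j) + 2 * int n - (2 * int j - 1))
        \<and> (\<forall>j\<in>{1..n}. h (2 * j) = int (ka j) + 2 * int n - 2 * int j)"
  have nzA: "qpinf ((q^2)^n * z * \<alpha>) q \<noteq> 0" using nz1(2) unfolding t z1 .
  have nzZ: "\<forall>p. qpinf (z * (q * z) * (q^2)^p) q \<noteq> 0 \<and> qpinf (inverse q * (q^2)^n * z * (q * z) * (q^2)^p) q \<noteq> 0"
    using nz2 unfolding w t z1 z2 by blast
  have cv: "convergent_prod (\<lambda>p. qpinf (z * (q * z) * (q^2)^p) q * qpinf (inverse q * (q^2)^n * z * (q * z) * (q^2)^(p + n)) q
             / (qpinf (z * (q * z) * (q^2)^(p + n)) q * qpinf (inverse q * (q^2)^n * z * (q * z) * (q^2)^p) q))"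
    using cv_e unfolding w t z1 z2 .
  show "Pr_e q t 2 n z1 z2 w \<alpha> mu ka = PN q z \<alpha> (2 * n) h"
    unfolding w t z1 z2
    by (rule main_even[OF q0 q1 n z a nzA nzZ cv]) (use A in auto)
next
  fix mu ka :: "nat \<Rightarrow> nat" and h :: "nat \<Rightarrow> int"
  assume A: "(\<forall>i>n. mu i = 0) \<and> (\<forall>i\<ge>n. ka i = 0)
        \<and> (\<forall>j\<in>{1..n-1}. ka j \<le> mu j \<and> mu (Suc j) \<le> ka j)
        \<and> (\<forall>j\<in>{1..n}. h (2 * j - 1) = int (mu j) + (2 * int n - 1) - (2 * int j - 1))
        \<and> (\<forall>j\<in>{1..n-1}. h (2 * j) = int (ka j) + (2 * int n - 1) - 2 * int j)"
  obtain m where nm: "n = Suc m" using n by (intro that[of "n - 1"]) simp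
  have nzA: "qpinf (q * (q^2)^(n-1) * z * \<alpha>) q \<noteq> 0" using nz1(3) unfolding u t z1 .
  have nzZ: "\<forall>p. qpinf (z * (q * z) * (q^2)^p) q \<noteq> 0 \<and> qpinf (q * (q^2)^(n-1) * z * (q * z) * (q^2)^p) q \<noteq> 0"
    using nz2 unfolding u t z1 z2 by blast
  have cv: "convergent_prod (\<lambda>p. qpinf (z * (q * z) * (q^2)^p) q * qpinf (q * (q^2)^(n-1) * z * (q * z) * (q^2)^(p + n - 1)) q
             / (qpinf (q * (q^2)^(n-1) * z * (q * z) * (q^2)^p) q * qpinf (z * (q * z) * (q^2)^(p + n - 1)) q))"
    using cv_o unfolding u t z1 z2 .
  show "Pr_o q t 2 n z1 z2 u \<alpha> mu ka = PN q z \<alpha> (2 * n - 1) h"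
    unfolding u t z1 z2
    by (rule main_odd[OF q0 q1 nm z a nzA nzZ cv]) (use A in auto)
qed

end
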